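(* Let $f_k(z;213)=\sum_{n\ge 1} a_{n,k}(213)z^n$, where $a_{n,k}(213)$ is the number of cyclic permutations $\pi\in\mathfrak S_n$ whose one-line notation avoids $\delta_k=k(k-1)\cdots21$ and whose cycle form $C(\pi)$ avoids $213$. Then for $k\ge 4$, \[f_k(z;213)=\frac{z}{1-f_{k-1}(z;213)},\] with $f_1(z;213)=0$, $f_2(z;213)=z$, and $f_3(z;213)=\frac{z(1-z)}{1-2z}$.
   Context: A permutation $\pi\in\mathfrak S_n$ is cyclic if it consists of a single $n$-cycle. For cyclic $\pi$, $C(\pi)=(1,c_2,\dots,c_n)$ with $c_2=\pi(1)$, $c_{i+1}=\pi(c_i)$, viewed as the sequence $1c_2\cdots c_n$ for pattern avoidance. A sequence avoids a pattern $\sigma\in\mathfrak S_m$ if no subsequence of length $m$ is in the same relative order as $\sigma$. The one-line notation of $\pi$ is $\pi_1\cdots\pi_n$, $\pi_i=\pi(i)$. *)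

theory Defs
  imports "HOL-Combinatorics.Permutations" "HOL-Computational_Algebra.Formal_Power_Series"
begin

text \<open>Permutations of {1..n} are functions nat => nat permuting {1..n} (identity elsewhere).
  A permutation is cyclic if it consists of a single n-cycle, i.e. the orbit of 1 is all of {1..n}.\<close>
definition cyclic_perm :: "nat \<Rightarrow> (nat \<Rightarrow> nat) \<Rightarrow> bool" where
  "cyclic_perm n p \<longleftrightarrow> p permutes {1..n} \<and> 1 \<le> n \<and> {(p ^^ m) 1 | m. True} = {1..n}"

definition one_line :: "nat \<Rightarrow> (nat \<Rightarrow> nat) \<Rightarrow> nat list" where
  "one_line n p = map p [1..<n+1]"

definition cycle_form :: "nat \<Rightarrow> (nat \<Rightarrow> nat) \<Rightarrow> nat list" where
  "cycle_form n p = map (\<lambda>i. (p ^^ i) 1) [0..<n]"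

definition contains_pattern :: "nat list \<Rightarrow> nat list \<Rightarrow> bool" where
  "contains_pattern xs sigma \<longleftrightarrow>
     (\<exists>idx :: nat \<Rightarrow> nat. strict_mono_on {..<length sigma} idx \<and>
        (\<forall>a<length sigma. idx a < length xs) \<and>
        (\<forall>a<length sigma. \<forall>b<length sigma. (xs ! idx a < xs ! idx b) \<longleftrightarrow> (sigma ! a < sigma ! b)))"

definition avoids :: "nat list \<Rightarrow> nat list \<Rightarrow> bool" where
  "avoids xs sigma \<longleftrightarrow> \<not> contains_pattern xs sigma"

definition delta :: "nat \<Rightarrow> nat list" where
  "delta k = rev [1..<k+1]"

definition a_213 :: "nat \<Rightarrow> nat \<Rightarrow> nat" where
  "a_213 n k = card {p. cyclic_perm n p \<and> avoids (one_line n p) (delta k)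
                        \<and> avoids (cycle_form n p) [2,1,3]}"

definition f_213 :: "nat \<Rightarrow> real fps" where
  "f_213 k = Abs_fps (\<lambda>n. if n = 0 then 0 else real (a_213 n k))"

end

theory Submission
  imports Defs "HOL-Library.Sublist"
begin

section \<open>Decreasing sets\<close>

definition decset :: "(nat \<Rightarrow> nat \<Rightarrow> bool) \<Rightarrow> (nat \<Rightarrow> nat) \<Rightarrow> nat set \<Rightarrow> bool" where
  "decset lt v S \<longleftrightarrow> (\<forall>x\<in>S. \<forall>y\<in>S. lt x y \<longrightarrow> v y < v x)"

definition hasdec :: "(nat \<Rightarrow> nat \<Rightarrow> bool) \<Rightarrow> (nat \<Rightarrow> nat) \<Rightarrow> nat set \<Rightarrow> nat \<Rightarrow> bool" where
  "hasdec lt v A k \<longleftrightarrow> (\<exists>S\<subseteq>A. finite S \<and> card S = k \<and> decset lt v S)"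

lemma decset_subset: "decset lt v S \<Longrightarrow> T \<subseteq> S \<Longrightarrow> decset lt v T"
  unfolding decset_def by blast

lemma hasdec_zero [simp]: "hasdec lt v A 0"
  unfolding hasdec_def decset_def by (intro exI[of _ "{}"]) auto

lemma hasdec_mono_set: "hasdec lt v A k \<Longrightarrow> A \<subseteq> A' \<Longrightarrow> hasdec lt v A' k"
  unfolding hasdec_def by blast

lemma hasdec_le: "hasdec lt v A k \<Longrightarrow> k' \<le> k \<Longrightarrow> hasdec lt v A k'"
proof -
  assume h: "hasdec lt v A k" and le: "k' \<le> k"
  then obtain S where S: "S \<subseteq> A" "finite S" "card S = k" "decset lt v S"
    unfolding hasdec_def by blast
  have "k' \<le> card S" using S le by simp
  then obtain T where "T \<subseteq> S" "card T = k'" "finite T"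
    by (rule obtain_subset_with_card_n)
  then show ?thesis unfolding hasdec_def using S decset_subset[of lt v S T] by blast
qed

lemma hasdec_remove: "hasdec lt v A (Suc k) \<Longrightarrow> hasdec lt v (A - {e}) k"
proof -
  assume "hasdec lt v A (Suc k)"
  then obtain S where S: "S \<subseteq> A" "finite S" "card S = Suc k" "decset lt v S"
    unfolding hasdec_def by blast
  have "k \<le> card (S - {e})" using S by (simp add: card_Diff_singleton_if)
  then obtain T where T: "T \<subseteq> S - {e}" "card T = k" "finite T"
    by (rule obtain_subset_with_card_n)
  then show ?thesis unfolding hasdec_def using S decset_subset[of lt v S T]
    by (intro exI[of _ T]) auto
qed

lemma hasdec_cong:
  assumes "\<And>x y. x \<in> A \<Longrightarrow> y \<in> A \<Longrightarrow> lt x y \<longleftrightarrow> lt' x y"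
    and "\<And>x y. x \<in> A \<Longrightarrow> y \<in> A \<Longrightarrow> v x < v y \<longleftrightarrow> v' x < v' y"
  shows "hasdec lt v A k \<longleftrightarrow> hasdec lt' v' A k"
proof -
  have "decset lt v S \<longleftrightarrow> decset lt' v' S" if "S \<subseteq> A" for S
  proof -
    have "\<forall>x\<in>S. \<forall>y\<in>S. (lt x y \<longrightarrow> v y < v x) = (lt' x y \<longrightarrow> v' y < v' x)"
    proof (intro ballI)
      fix x y assume "x \<in> S" "y \<in> S"
      then have "x \<in> A" "y \<in> A" using that by auto
      then show "(lt x y \<longrightarrow> v y < v x) = (lt' x y \<longrightarrow> v' y < v' x)"
        using assms(1)[of x y] assms(2)[of y x] by simp
    qed
    then show ?thesis unfolding decset_def by blast
  qed
  then show ?thesis unfolding hasdec_def by blast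
qed

lemma hasdec_transfer:
  assumes bij: "bij_betw f A A'"
    and o: "\<And>x y. x \<in> A \<Longrightarrow> y \<in> A \<Longrightarrow> lt x y \<longleftrightarrow> lt' (f x) (f y)"
    and w: "\<And>x y. x \<in> A \<Longrightarrow> y \<in> A \<Longrightarrow> v x < v y \<longleftrightarrow> v' (f x) < v' (f y)"
  shows "hasdec lt v A k \<longleftrightarrow> hasdec lt' v' A' k"
proof
  assume "hasdec lt v A k"
  then obtain S where S: "S \<subseteq> A" "finite S" "card S = k" "decset lt v S"
    unfolding hasdec_def by blast
  have inj: "inj_on f S" using bij S(1) by (meson bij_betw_def inj_on_subset)
  have "f ` S \<subseteq> A'" using bij S(1) bij_betw_imp_surj_on by blast
  moreover have "card (f ` S) = k" using inj S by (simp add: card_image)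
  moreover have "decset lt' v' (f ` S)"
    unfolding decset_def
  proof (intro ballI impI)
    fix x' y' assume "x' \<in> f ` S" "y' \<in> f ` S" "lt' x' y'"
    then obtain x y where xy: "x \<in> S" "y \<in> S" "x' = f x" "y' = f y" "lt' (f x) (f y)" by blast
    have xyA: "x \<in> A" "y \<in> A" using xy S(1) by auto
    have "lt x y" using o[OF xyA] xy(5) by simp
    then have "v y < v x" using S(4) xy unfolding decset_def by blast
    then show "v' y' < v' x'" using w[OF xyA(2,1)] xy by simp
  qed
  ultimately show "hasdec lt' v' A' k" unfolding hasdec_def using S(2) by blast
next
  assume "hasdec lt' v' A' k"
  then obtain S' where S: "S' \<subseteq> A'" "finite S'" "card S' = k" "decset lt' v' S'"
    unfolding hasdec_def by blast
  define S where "S = {x\<in>A. f x \<in> S'}"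
  have img: "f ` S = S'"
  proof
    show "f ` S \<subseteq> S'" unfolding S_def by blast
    show "S' \<subseteq> f ` S"
    proof
      fix y assume "y \<in> S'"
      then have "y \<in> f ` A" using S(1) bij bij_betw_imp_surj_on by blast
      then obtain x where "x \<in> A" "y = f x" by blast
      then show "y \<in> f ` S" using \<open>y \<in> S'\<close> unfolding S_def by blast
    qed
  qed
  have SA: "S \<subseteq> A" unfolding S_def by blast
  then have inj: "inj_on f S" using bij bij_betw_imp_inj_on inj_on_subset by blast
  have fin: "finite S" using inj img S(2) finite_image_iff by blast
  have "card S = k" using card_image[OF inj] img S(3) by simp
  moreover have "decset lt v S"
    unfolding decset_def
  proof (intro ballI impI)
    fix x y assume xy: "x \<in> S" "y \<in> S" "lt x y"
    then have A: "x \<in> A" "y \<in> A" "f x \<in> S'" "f y \<in> S'" unfolding S_def by auto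
    then have "lt' (f x) (f y)" using o[OF A(1,2)] xy by simp
    then have "v' (f y) < v' (f x)" using S(4) A unfolding decset_def by blast
    then show "v y < v x" using w[OF A(2,1)] by simp
  qed
  ultimately show "hasdec lt v A k" unfolding hasdec_def using fin SA by blast
qed

lemma hasdec_split:
  assumes "A = A1 \<union> A2"
    and inc: "\<And>x y. x \<in> A1 - A2 \<Longrightarrow> y \<in> A2 - A1 \<Longrightarrow> \<not> decset lt v {x, y}"
  shows "hasdec lt v A k \<longleftrightarrow> hasdec lt v A1 k \<or> hasdec lt v A2 k"
proof
  assume "hasdec lt v A k"
  then obtain S where S: "S \<subseteq> A" "finite S" "card S = k" "decset lt v S"
    unfolding hasdec_def by blast
  show "hasdec lt v A1 k \<or> hasdec lt v A2 k"
  proof (cases "S \<inter> (A1 - A2) = {}")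
    case True
    then have "S \<subseteq> A2" using S(1) assms(1) by blast
    then show ?thesis using S unfolding hasdec_def by blast
  next
    case False
    then obtain x where x: "x \<in> S" "x \<in> A1 - A2" by blast
    have "S \<subseteq> A1"
    proof
      fix y assume y: "y \<in> S"
      show "y \<in> A1"
      proof (rule ccontr)
        assume "y \<notin> A1"
        then have "y \<in> A2 - A1" using y S(1) assms(1) by blast
        then have "\<not> decset lt v {x, y}" using inc x by blast
        moreover have "{x, y} \<subseteq> S" using x y by blast
        then have "decset lt v {x, y}" using decset_subset[OF S(4)] by blast
        ultimately show False by blast
      qed
    qed
    then show ?thesis using S unfolding hasdec_def by blast
  qed
next
  assume "hasdec lt v A1 k \<or> hasdec lt v A2 k"
  moreover have "A1 \<subseteq> A" "A2 \<subseteq> A" using assms(1) by auto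
  ultimately show "hasdec lt v A k" using hasdec_mono_set by metis
qed

lemma hasdec_univ:
  assumes e: "e \<in> A" and irr: "\<not> lt e e"
    and c: "\<And>x. x \<in> A - {e} \<Longrightarrow> decset lt v {x, e}"
  shows "hasdec lt v A (Suc k) \<longleftrightarrow> hasdec lt v (A - {e}) k"
proof
  assume "hasdec lt v A (Suc k)" then show "hasdec lt v (A - {e}) k" by (rule hasdec_remove)
next
  assume "hasdec lt v (A - {e}) k"
  then obtain S where S: "S \<subseteq> A - {e}" "finite S" "card S = k" "decset lt v S"
    unfolding hasdec_def by blast
  have "insert e S \<subseteq> A" using S e by blast
  moreover have "e \<notin> S" using S by blast
  then have "card (insert e S) = Suc k" using S by simp
  moreover have "decset lt v (insert e S)"
    unfolding decset_def
  proof (intro ballI impI)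
    fix x y assume x: "x \<in> insert e S" and y: "y \<in> insert e S" and l: "lt x y"
    show "v y < v x"
    proof (cases "x = e")
      case True
      show ?thesis
      proof (cases "y = e")
        case True then show ?thesis using \<open>x = e\<close> l irr by simp
      next
        case False
        then have "y \<in> A - {e}" using y S by blast
        then show ?thesis using c[of y] l True unfolding decset_def by auto
      qed
    next
      case False
      then have xA: "x \<in> A - {e}" "x \<in> S" using x S by auto
      show ?thesis
      proof (cases "y = e")
        case True
        then show ?thesis using c[OF xA(1)] l unfolding decset_def by auto
      next
        case False
        then have "y \<in> S" using y by blast
        then show ?thesis using S(4) xA(2) l unfolding decset_def by blast
      qed
    qed
  qed
  ultimately show "hasdec lt v A (Suc k)" unfolding hasdec_def using S(2) by blast
qed

lemma hasdec_empty [simp]: "hasdec lt v {} k \<longleftrightarrow> k = 0"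
  unfolding hasdec_def decset_def by auto

lemma hasdec_single:
  assumes "\<not> lt e e" shows "hasdec lt v {e} k \<longleftrightarrow> k \<le> 1"
proof
  assume "hasdec lt v {e} k"
  then obtain S where "S \<subseteq> {e}" "card S = k" unfolding hasdec_def by blast
  then show "k \<le> 1" using card_mono[of "{e}" S] by auto
next
  assume k: "k \<le> 1"
  show "hasdec lt v {e} k"
  proof (cases k)
    case 0 then show ?thesis by simp
  next
    case (Suc m)
    then have "k = 1" using k by simp
    then show ?thesis unfolding hasdec_def decset_def using assms by (intro exI[of _ "{e}"]) auto
  qed
qed


section \<open>Lists and cycles\<close>

fun nextl :: "nat list \<Rightarrow> nat \<Rightarrow> nat" where
  "nextl (x # y # zs) v = (if v = x then y else nextl (y # zs) v)"
| "nextl _ v = v"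

definition cyc :: "nat list \<Rightarrow> nat \<Rightarrow> nat" where
  "cyc C v = (if v = last C then hd C else nextl C v)"

lemma nextl_nth: "distinct C \<Longrightarrow> Suc i < length C \<Longrightarrow> nextl C (C ! i) = C ! Suc i"
proof (induction C arbitrary: i)
  case Nil then show ?case by simp
next
  case (Cons x xs)
  then obtain y zs where xs: "xs = y # zs" by (cases xs) auto
  show ?case
  proof (cases i)
    case 0 then show ?thesis using xs by simp
  next
    case (Suc i')
    then have "(x # xs) ! i = xs ! i'" by simp
    moreover have "xs ! i' \<noteq> x" using Cons.prems Suc by (auto simp: in_set_conv_nth)
    ultimately show ?thesis using Cons Suc xs by simp
  qed
qed

lemma cyc_nth:
  assumes "distinct C" "i < length C"
  shows "cyc C (C ! i) = C ! (Suc i mod length C)"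
proof (cases "Suc i < length C")
  case True
  have "C \<noteq> []" using assms by auto
  then have "last C = C ! (length C - 1)" by (simp add: last_conv_nth)
  then have "C ! i \<noteq> last C" using assms True by (simp add: nth_eq_iff_index_eq)
  then show ?thesis using True assms nextl_nth unfolding cyc_def by simp
next
  case False
  then have i: "i = length C - 1" "Suc i = length C" using assms by auto
  have "C \<noteq> []" using assms by auto
  then have "last C = C ! i" using i by (simp add: last_conv_nth)
  then show ?thesis unfolding cyc_def using i assms \<open>C \<noteq> []\<close> by (simp add: hd_conv_nth)
qed

lemma cyc_in: "distinct C \<Longrightarrow> x \<in> set C \<Longrightarrow> cyc C x \<in> set C"
  by (metis cyc_nth in_set_conv_nth length_pos_if_in_set mod_less_divisor)

lemma cyc_inj: assumes "distinct C" shows "inj_on (cyc C) (set C)"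
proof
  fix x y assume x: "x \<in> set C" and y: "y \<in> set C" and e: "cyc C x = cyc C y"
  obtain i where i: "i < length C" "x = C ! i" using x by (auto simp: in_set_conv_nth)
  obtain j where j: "j < length C" "y = C ! j" using y by (auto simp: in_set_conv_nth)
  have "C ! (Suc i mod length C) = C ! (Suc j mod length C)"
    using e i j cyc_nth assms by simp
  moreover have "0 < length C" using i(1) by linarith
  then have "Suc i mod length C < length C" "Suc j mod length C < length C"
    by simp_all
  ultimately have "Suc i mod length C = Suc j mod length C"
    using assms nth_eq_iff_index_eq by blast
  then have "i = j" using i(1) j(1)
    by (metis Suc_lessI mod_Suc mod_less nat.inject zero_neq_one Suc_neq_Zero)
  then show "x = y" using i j by simp
qed

lemma nextl_app1: "x \<in> set xs \<Longrightarrow> x \<noteq> last xs \<Longrightarrow> nextl (xs @ ys) x = nextl xs x"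
proof (induction xs)
  case Nil then show ?case by simp
next
  case (Cons a xs)
  show ?case
  proof (cases xs)
    case Nil then show ?thesis using Cons by simp
  next
    case (Cons b zs)
    then show ?thesis using Cons.IH Cons.prems by (cases "x = a") auto
  qed
qed

lemma nextl_app2: "x \<notin> set xs \<Longrightarrow> nextl (xs @ ys) x = nextl ys x"
proof (induction xs)
  case Nil then show ?case by simp
next
  case (Cons a xs)
  show ?case
  proof (cases xs)
    case Nil then show ?thesis using Cons by (cases ys) auto
  next
    case (Cons b zs)
    then show ?thesis using Cons.IH Cons.prems by auto
  qed
qed

lemma nextl_app_last: "distinct xs \<Longrightarrow> xs \<noteq> [] \<Longrightarrow> ys \<noteq> [] \<Longrightarrow> nextl (xs @ ys) (last xs) = hd ys"
proof (induction xs)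
  case Nil then show ?case by simp
next
  case (Cons a xs)
  show ?case
  proof (cases xs)
    case Nil then show ?thesis using Cons by (cases ys) auto
  next
    case (Cons b zs)
    then have "last (a # xs) = last xs" "last xs \<noteq> a" using Cons.prems by auto
    then show ?thesis using Cons.IH Cons.prems Cons by auto
  qed
qed

definition av213 :: "nat list \<Rightarrow> bool" where
  "av213 C \<longleftrightarrow> \<not> (\<exists>x y z. subseq [x, y, z] C \<and> y < x \<and> x < z)"

lemma av213_subseq: "av213 C \<Longrightarrow> subseq D C \<Longrightarrow> av213 D"
  unfolding av213_def using subseq_order.trans by blast

lemma subseq_set: "subseq xs ys \<Longrightarrow> set xs \<subseteq> set ys"
proof
  fix x assume "subseq xs ys" "x \<in> set xs"
  then obtain y where "y \<in> set ys" "x = y" by (rule list_emb_set)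
  then show "x \<in> set ys" by simp
qed

definition ok :: "nat set \<Rightarrow> nat list \<Rightarrow> bool" where
  "ok V C \<longleftrightarrow> C \<noteq> [] \<and> distinct C \<and> set C = V \<and> (\<forall>x\<in>V. hd C \<le> x) \<and> av213 C"

lemma ok_hd: assumes "ok {a..<a+n} C" shows "hd C = a" "0 < n"
proof -
  have "C \<noteq> []" using assms unfolding ok_def by blast
  then have "hd C \<in> {a..<a+n}" using assms unfolding ok_def by (metis hd_in_set)
  then show "0 < n" by auto
  then have "a \<in> {a..<a+n}" by simp
  then have "hd C \<le> a" using assms unfolding ok_def by blast
  then show "hd C = a" using \<open>hd C \<in> {a..<a+n}\<close> by auto
qed

lemma ok_length: "ok {a..<a+n} C \<Longrightarrow> length C = n"
  unfolding ok_def by (metis card_atLeastLessThan distinct_card add_diff_cancel_left')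

lemma ok_single: "ok {a..<a+1} C \<longleftrightarrow> C = [a]"
proof
  assume h: "ok {a..<a+1} C"
  have "length C = 1" using ok_length[OF h] .
  moreover have "hd C = a" using ok_hd(1)[OF h] .
  ultimately show "C = [a]" by (cases C) auto
next
  assume "C = [a]"
  moreover have "av213 [a]" unfolding av213_def using subseq_set by fastforce
  ultimately show "ok {a..<a+1} C" unfolding ok_def by auto
qed


section \<open>Splitting\<close>

lemma ok_split:
  assumes okC: "ok {a..<a+n} C" and n: "2 \<le> n"
  shows "\<exists>B rest. C = a # B @ rest \<and> B \<noteq> [] \<and> ok {a + Suc (length rest)..<a+n} B
            \<and> ok {a..<a + Suc (length rest)} (a # rest)"
proof -
  have hdC: "hd C = a" using ok_hd[OF okC] by simp
  have lenC: "length C = n" using ok_length[OF okC] .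
  have dC: "distinct C" and sC: "set C = {a..<a+n}" and avC: "av213 C" and Cne: "C \<noteq> []"
    using okC unfolding ok_def by auto
  obtain w where C: "C = a # w" using Cne hdC by (cases C) auto
  have wne: "w \<noteq> []" using lenC n C by auto
  define b where "b = hd w"
  define B where "B = takeWhile (\<lambda>x. b \<le> x) w"
  define rest where "rest = dropWhile (\<lambda>x. b \<le> x) w"
  have w: "w = B @ rest" unfolding B_def rest_def by simp
  obtain w' where w': "w = b # w'" using wne unfolding b_def by (cases w) auto
  have Bne: "B \<noteq> []" unfolding B_def using w' by simp
  have hdB: "hd B = b" unfolding B_def using w' by simp
  have Bge: "\<forall>x\<in>set B. b \<le> x"
  proof
    fix x assume "x \<in> set B"
    then show "b \<le> x" unfolding B_def using set_takeWhileD[of x "\<lambda>x. b \<le> x" w] by blast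
  qed
  have bB: "b \<in> set B" using Bne hdB by (metis list.set_sel(1))
  have dist: "distinct (a # B @ rest)" using dC C w by simp
  have rest_lt: "\<forall>z\<in>set rest. z < b"
  proof (cases rest)
    case Nil then show ?thesis by simp
  next
    case (Cons r rs)
    have "\<not> b \<le> hd rest" unfolding rest_def
      by (rule hd_dropWhile) (use Cons rest_def in simp)
    then have r: "r < b" using Cons by simp
    show ?thesis
    proof
      fix z assume z: "z \<in> set rest"
      show "z < b"
      proof (rule ccontr)
        assume "\<not> z < b"
        moreover have "z \<noteq> b" using dist z bB by auto
        ultimately have bz: "b < z" by simp
        have "z \<noteq> r" using r bz by simp
        then have zrs: "z \<in> set rs" using z Cons by simp
        have "subseq [b] (a # B)" using bB by (simp add: subseq_singleton_left)
        moreover have "subseq [r, z] rest" using Cons zrs by (simp add: subseq_singleton_left)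
        ultimately have "subseq ([b] @ [r, z]) ((a # B) @ rest)" by (rule list_emb_append_mono)
        then have "subseq [b, r, z] C" using C w by simp
        then show False using avC r bz unfolding av213_def by blast
      qed
    qed
  qed
  have sCw: "set C = insert a (set B \<union> set rest)" using C w by auto
  have aB: "a \<notin> set B" "a \<notin> set rest" "set B \<inter> set rest = {}" using dist by auto
  have bV: "b \<in> {a..<a+n}" using sCw sC bB by blast
  have ba: "a < b" using bV bB aB(1) by (cases "a = b") auto
  have setB: "set B = {b..<a+n}"
  proof
    show "set B \<subseteq> {b..<a+n}"
    proof
      fix x assume x: "x \<in> set B"
      then have "x \<in> set C" using sCw by blast
      then have "x < a + n" using sC by auto
      then show "x \<in> {b..<a+n}" using Bge x by auto
    qed
    show "{b..<a+n} \<subseteq> set B"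
    proof
      fix x assume x: "x \<in> {b..<a+n}"
      have "x \<in> set C" using x bV sC by auto
      moreover have "x \<noteq> a" using x ba by auto
      moreover have "x \<notin> set rest" using rest_lt x by auto
      ultimately show "x \<in> set B" using sCw by auto
    qed
  qed
  have "distinct B" using dist by simp
  then have lenB: "length B = a + n - b" using distinct_card[of B] setB by simp
  have lens: "n = Suc (length B + length rest)" using lenC C w by simp
  then have bval: "b = a + Suc (length rest)" using lenB bV by auto
  have setR: "set (a # rest) = {a..<a + Suc (length rest)}"
  proof -
    have "set (a # rest) = set C - set B" using sCw aB by auto
    also have "\<dots> = {a..<b}" using sC setB ba bV by auto
    finally show ?thesis using bval by simp
  qed
  have okB: "ok {a + Suc (length rest)..<a+n} B"
  proof -
    have "subseq B (B @ rest)" by (rule prefix_imp_subseq) simp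
    then have "subseq B C" unfolding C w by (rule list_emb_Cons)
    then have "av213 B" using avC av213_subseq by blast
    then show ?thesis unfolding ok_def using Bne \<open>distinct B\<close> setB bval hdB Bge by auto
  qed
  have okR: "ok {a..<a + Suc (length rest)} (a # rest)"
  proof -
    have "subseq rest (B @ rest)" by (rule list_emb_append2) simp
    then have "subseq (a # rest) C" unfolding C w by simp
    then have "av213 (a # rest)" using avC av213_subseq by blast
    moreover have "distinct (a # rest)" using dist by auto
    ultimately show ?thesis unfolding ok_def using setR by auto
  qed
  show ?thesis using okB okR Bne C w by blast
qed

lemma ok_join:
  assumes okB: "ok {a+j..<a+n} B" and okR: "ok {a..<a+j} (a # rest)" and j: "1 \<le> j" "j < n"
  shows "ok {a..<a+n} (a # B @ rest)"
proof -
  have dB: "distinct B" "set B = {a+j..<a+n}" "B \<noteq> []" "av213 B" using okB unfolding ok_def by auto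
  have dR: "distinct (a # rest)" "set (a # rest) = {a..<a+j}" "av213 (a # rest)"
    using okR unfolding ok_def by auto
  have disj: "set B \<inter> set (a # rest) = {}" using dB(2) dR(2) by auto
  have dist: "distinct (a # B @ rest)" using dB(1) dR(1) disj by auto
  have "set (a # B @ rest) = set (a # rest) \<union> set B" by auto
  also have "\<dots> = {a..<a+j} \<union> {a+j..<a+n}" using dB(2) dR(2) by simp
  also have "\<dots> = {a..<a+n}" using j by auto
  finally have setC: "set (a # B @ rest) = {a..<a+n}" .
  have "set rest \<subseteq> {a..<a+j}" using dR(2) set_subset_Cons by metis
  then have restlt: "\<forall>u\<in>set rest. u < a + j" by auto
  have Bge: "\<forall>u\<in>set B. a + j \<le> u" using dB(2) by auto
  have av: "av213 (a # B @ rest)"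
    unfolding av213_def
  proof
    assume "\<exists>x y z. subseq [x, y, z] (a # B @ rest) \<and> y < x \<and> x < z"
    then obtain x y z where s: "subseq [x, y, z] ((a # B) @ rest)" "y < x" "x < z" by auto
    have "y \<in> set (a # B @ rest)" using subseq_set[OF s(1)] by auto
    then have "a \<le> y" using setC by auto
    then have xa: "x \<noteq> a" using s by auto
    from s(1) obtain xs1 xs2 where sp: "[x, y, z] = xs1 @ xs2" "subseq xs1 (a # B)" "subseq xs2 rest"
      by (rule subseq_appendE)
    have "xs1 = [] \<and> xs2 = [x, y, z] \<or> (xs1 = [x] \<and> xs2 = [y, z]) \<or> (xs1 = [x, y] \<and> xs2 = [z])
          \<or> (xs1 = [x, y, z] \<and> xs2 = [])"
      using sp(1) by (cases xs1; cases xs2) (auto simp: Cons_eq_append_conv)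
    then show False
    proof (elim disjE conjE)
      assume "xs2 = [x, y, z]"
      then have "subseq [x, y, z] rest" using sp(3) by simp
      then have "subseq [x, y, z] (a # rest)" by (rule list_emb_Cons)
      then show False using dR(3) s unfolding av213_def by blast
    next
      assume h: "xs1 = [x]" "xs2 = [y, z]"
      then have "x \<in> set B" using sp(2) xa subseq_set by fastforce
      moreover have "z \<in> set rest" using sp(3) h subseq_set by fastforce
      ultimately show False using restlt Bge s(3) by fastforce
    next
      assume h: "xs1 = [x, y]" "xs2 = [z]"
      then have "x \<in> set B" using sp(2) xa subseq_set by fastforce
      moreover have "z \<in> set rest" using sp(3) h subseq_set by fastforce
      ultimately show False using restlt Bge s(3) by fastforce
    next
      assume h: "xs1 = [x, y, z]"
      then have "subseq [x, y, z] B" using sp(2) xa by simp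
      then show False using dB(4) s unfolding av213_def by blast
    qed
  qed
  show ?thesis unfolding ok_def using dist setC av by auto
qed

lemma cyc_split:
  assumes d: "distinct (a # B @ rest)" and Bne: "B \<noteq> []"
  shows "cyc (a # B @ rest) a = hd B"
    and "x \<in> set B \<Longrightarrow> x \<noteq> last B \<Longrightarrow> cyc (a # B @ rest) x = cyc B x"
    and "cyc (a # B @ rest) (last B) = cyc (a # rest) a"
    and "x \<in> set rest \<Longrightarrow> cyc (a # B @ rest) x = cyc (a # rest) x"
    and "cyc B (last B) = hd B"
proof -
  obtain b B' where B: "B = b # B'" using Bne by (cases B) auto
  have lastC: "last (a # B @ rest) = (if rest = [] then last B else last rest)" using Bne by auto
  have lastin: "last (a # B @ rest) \<in> set B \<union> set rest" using Bne lastC by (cases "rest = []") auto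
  have an: "a \<noteq> last (a # B @ rest)" using d lastin by auto
  show "cyc (a # B @ rest) a = hd B" unfolding cyc_def using an B by simp
  show "cyc B (last B) = hd B" unfolding cyc_def by simp
  {
    assume x: "x \<in> set B" "x \<noteq> last B"
    have "x \<noteq> last (a # B @ rest)"
    proof (cases "rest = []")
      case True then show ?thesis using x lastC by simp
    next
      case False
      then have "last (a # B @ rest) \<in> set rest" using lastC by simp
      then show ?thesis using x d by auto
    qed
    moreover have "nextl ((a # B) @ rest) x = nextl (a # B) x"
      using x Bne by (intro nextl_app1) auto
    moreover have "nextl ([a] @ B) x = nextl B x" using x d by (intro nextl_app2) auto
    ultimately show "cyc (a # B @ rest) x = cyc B x" unfolding cyc_def using x by simp
  }
  show "cyc (a # B @ rest) (last B) = cyc (a # rest) a"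
  proof (cases "rest = []")
    case True then show ?thesis unfolding cyc_def using Bne by simp
  next
    case False
    then obtain r rs where r: "rest = r # rs" by (cases rest) auto
    have "last B \<in> set B" "last rest \<in> set rest" using Bne False by auto
    then have "last B \<noteq> last (a # B @ rest)" using lastC False d by auto
    moreover have "nextl ((a # B) @ rest) (last (a # B)) = hd rest"
      using d False by (intro nextl_app_last) auto
    moreover have "last (a # rest) \<noteq> a" using d False by auto
    ultimately show ?thesis unfolding cyc_def using Bne r by simp
  qed
  {
    assume x: "x \<in> set rest"
    show "cyc (a # B @ rest) x = cyc (a # rest) x"
    proof (cases "x = last rest")
      case True
      then show ?thesis unfolding cyc_def using x by auto
    next
      case False
      have xn: "x \<noteq> last (a # B @ rest)" using False lastC x by auto
      have xa: "x \<noteq> a" using x d by auto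
      have "nextl ((a # B) @ rest) x = nextl rest x" using x d by (intro nextl_app2) auto
      moreover have "nextl ([a] @ rest) x = nextl rest x" using xa by (intro nextl_app2) auto
      moreover have "x \<noteq> last (a # rest)" using False x by auto
      ultimately show ?thesis unfolding cyc_def using xn by simp
    qed
  }
qed


section \<open>Statistics\<close>

definition rot :: "nat \<Rightarrow> nat \<Rightarrow> nat \<Rightarrow> bool" where
  "rot a x y \<longleftrightarrow> x \<noteq> a \<and> (y = a \<or> x < y)"

definition D0 :: "nat list \<Rightarrow> nat \<Rightarrow> bool" where
  "D0 C k = hasdec (<) (cyc C) (set C) k"
definition DL :: "nat list \<Rightarrow> nat \<Rightarrow> bool" where
  "DL C k = hasdec (<) (cyc C) (set C - {last C}) k"
definition DR :: "nat list \<Rightarrow> nat \<Rightarrow> bool" where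
  "DR C k = hasdec (rot (hd C)) (cyc C) (set C) k"
definition DRL :: "nat list \<Rightarrow> nat \<Rightarrow> bool" where
  "DRL C k = hasdec (rot (hd C)) (cyc C) (set C - {last C}) k"

lemma rot_irr: "\<not> rot a x x" unfolding rot_def by auto

lemma stats_single:
  "D0 [a] k \<longleftrightarrow> k \<le> 1" "DL [a] k \<longleftrightarrow> k = 0" "DR [a] k \<longleftrightarrow> k \<le> 1" "DRL [a] k \<longleftrightarrow> k = 0"
  unfolding D0_def DL_def DR_def DRL_def using hasdec_single[of "(<)" a] hasdec_single[of "rot a" a]
  by (auto simp: rot_irr)

lemma D0_DL: "D0 C (Suc k) \<Longrightarrow> DL C k"
  unfolding D0_def DL_def using hasdec_remove by blast

lemma D0_le: "D0 C k \<Longrightarrow> k' \<le> k \<Longrightarrow> D0 C k'"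
  unfolding D0_def using hasdec_le by blast
lemma DL_le: "DL C k \<Longrightarrow> k' \<le> k \<Longrightarrow> DL C k'"
  unfolding DL_def using hasdec_le by blast
lemma DR_le: "DR C k \<Longrightarrow> k' \<le> k \<Longrightarrow> DR C k'"
  unfolding DR_def using hasdec_le by blast
lemma DRL_le: "DRL C k \<Longrightarrow> k' \<le> k \<Longrightarrow> DRL C k'"
  unfolding DRL_def using hasdec_le by blast

locale spl =
  fixes a :: nat and B rest :: "nat list"
  assumes d: "distinct (a # B @ rest)" and Bne: "B \<noteq> []"
    and low: "\<And>x z. x \<in> set B \<Longrightarrow> z \<in> set (a # rest) \<Longrightarrow> z < x"
    and bmin: "\<And>x. x \<in> set B \<Longrightarrow> hd B \<le> x"
    and amin: "\<And>z. z \<in> set rest \<Longrightarrow> a < z"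
begin

lemma dB: "distinct B" using d by simp
lemma dR: "distinct (a # rest)" using d by auto
lemma hdB_in: "hd B \<in> set B" using Bne by simp
lemma lastB_in: "last B \<in> set B" using Bne by simp
lemma a_notB: "a \<notin> set B" using d by simp
lemma a_notR: "a \<notin> set rest" using d by simp
lemma BR: "set B \<inter> set rest = {}" using d by simp

lemma pa: "cyc (a # B @ rest) a = hd B" using cyc_split(1)[OF d Bne] .

lemma pB: assumes "x \<in> set B" "x \<noteq> last B"
  shows "cyc (a # B @ rest) x = cyc B x" "hd B < cyc B x"
proof -
  show "cyc (a # B @ rest) x = cyc B x" using cyc_split(2)[OF d Bne assms] .
  have i: "cyc B x \<in> set B" using cyc_in[OF dB assms(1)] .
  have "cyc B x \<noteq> cyc B (last B)" using cyc_inj[OF dB] assms lastB_in unfolding inj_on_def by blast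
  then have "cyc B x \<noteq> hd B" using cyc_split(5)[OF d Bne] by simp
  then show "hd B < cyc B x" using bmin[OF i] by simp
qed

lemma pl: "cyc (a # B @ rest) (last B) = cyc (a # rest) a" "cyc (a # rest) a \<in> set (a # rest)"
  using cyc_split(3)[OF d Bne] cyc_in[OF dR, of a] by auto

lemma pr: assumes "x \<in> set rest"
  shows "cyc (a # B @ rest) x = cyc (a # rest) x" "cyc (a # rest) x \<in> set (a # rest)"
  using cyc_split(4)[OF d Bne assms] cyc_in[OF dR, of x] assms by auto

lemma plo: assumes "x \<in> insert (last B) (set rest)" shows "cyc (a # B @ rest) x < hd B"
proof (cases "x = last B")
  case True then show ?thesis using pl low hdB_in by simp
next
  case False then have "x \<in> set rest" using assms by simp
  then show ?thesis using pr low hdB_in by simp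
qed

lemma phi: assumes "x \<in> set B" "x \<noteq> last B" "y \<in> insert a (insert (last B) (set rest))"
  shows "cyc (a # B @ rest) y < cyc (a # B @ rest) x"
proof -
  have "hd B < cyc (a # B @ rest) x" using pB[OF assms(1,2)] by simp
  moreover have "cyc (a # B @ rest) y \<le> hd B"
  proof (cases "y = a")
    case True then show ?thesis using pa by simp
  next
    case False then show ?thesis using plo assms(3) by fastforce
  qed
  ultimately show ?thesis by simp
qed

lemma HB:
  assumes "\<And>x y. x \<in> set B \<Longrightarrow> y \<in> set B \<Longrightarrow> lt x y \<longleftrightarrow> x < y"
  shows "hasdec lt (cyc (a # B @ rest)) (set B) k \<longleftrightarrow> D0 B k"
  unfolding D0_def
proof (rule hasdec_cong)
  fix x y assume x: "x \<in> set B" and y: "y \<in> set B"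
  show "lt x y \<longleftrightarrow> x < y" using assms x y by blast
  show "cyc (a # B @ rest) x < cyc (a # B @ rest) y \<longleftrightarrow> cyc B x < cyc B y"
  proof (cases "x = last B"; cases "y = last B")
    assume "x = last B" "y = last B" then show ?thesis by simp
  next
    assume h: "x = last B" "y \<noteq> last B"
    have "cyc (a # B @ rest) x < cyc (a # B @ rest) y" using phi[OF y h(2)] h(1) by simp
    moreover have "cyc B x < cyc B y" using pB[OF y h(2)] h(1) cyc_split(5)[OF d Bne] by simp
    ultimately show ?thesis by simp
  next
    assume h: "x \<noteq> last B" "y = last B"
    have "cyc (a # B @ rest) y < cyc (a # B @ rest) x" using phi[OF x h(1)] h(2) by simp
    moreover have "cyc B y < cyc B x" using pB[OF x h(1)] h(2) cyc_split(5)[OF d Bne] by simp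
    ultimately show ?thesis by simp
  next
    assume h: "x \<noteq> last B" "y \<noteq> last B"
    then show ?thesis using pB x y by simp
  qed
qed

lemma HBL:
  assumes "\<And>x y. x \<in> set B \<Longrightarrow> y \<in> set B \<Longrightarrow> lt x y \<longleftrightarrow> x < y"
  shows "hasdec lt (cyc (a # B @ rest)) (set B - {last B}) k \<longleftrightarrow> DL B k"
  unfolding DL_def
proof (rule hasdec_cong)
  fix x y assume x: "x \<in> set B - {last B}" and y: "y \<in> set B - {last B}"
  show "lt x y \<longleftrightarrow> x < y" using assms x y by blast
  show "cyc (a # B @ rest) x < cyc (a # B @ rest) y \<longleftrightarrow> cyc B x < cyc B y"
    using pB x y by simp
qed

lemma HR:
  assumes R: "R \<subseteq> set rest"
    and o: "\<And>x y. x \<in> insert (last B) R \<Longrightarrow> y \<in> insert (last B) R \<Longrightarrow> lt x y \<longleftrightarrow> x < y"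
  shows "hasdec lt (cyc (a # B @ rest)) (insert (last B) R) k
     \<longleftrightarrow> hasdec (rot a) (cyc (a # rest)) (insert a R) k"
proof -
  define f where "f = (\<lambda>x. if x = last B then a else x)"
  have lR: "last B \<notin> R" using R lastB_in BR by blast
  have aR: "a \<notin> R" using R a_notR by blast
  have bij: "bij_betw f (insert (last B) R) (insert a R)"
    unfolding bij_betw_def inj_on_def f_def using lR aR by auto
  have Rlt: "\<And>x. x \<in> R \<Longrightarrow> x < last B" using R low lastB_in by auto
  show ?thesis
  proof (rule hasdec_transfer[OF bij])
    fix x y assume x: "x \<in> insert (last B) R" and y: "y \<in> insert (last B) R"
    show "lt x y \<longleftrightarrow> rot a (f x) (f y)"
    proof -
      have "x < y \<longleftrightarrow> rot a (f x) (f y)"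
      proof (cases "x = last B"; cases "y = last B")
        assume "x = last B" "y = last B" then show ?thesis unfolding rot_def f_def by simp
      next
        assume h: "x = last B" "y \<noteq> last B"
        then have "y \<in> R" using y by simp
        then show ?thesis using h Rlt[of y] aR unfolding rot_def f_def by auto
      next
        assume h: "x \<noteq> last B" "y = last B"
        then have "x \<in> R" using x by simp
        then show ?thesis using h Rlt[of x] aR unfolding rot_def f_def by auto
      next
        assume h: "x \<noteq> last B" "y \<noteq> last B"
        then have "x \<in> R" "y \<in> R" using x y by auto
        then show ?thesis using h aR unfolding rot_def f_def by auto
      qed
      then show ?thesis using o[OF x y] by simp
    qed
    have vx: "cyc (a # B @ rest) x = cyc (a # rest) (f x)"
      using x pl pr R lR unfolding f_def by auto
    have vy: "cyc (a # B @ rest) y = cyc (a # rest) (f y)"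
      using y pl pr R lR unfolding f_def by auto
    show "cyc (a # B @ rest) x < cyc (a # B @ rest) y \<longleftrightarrow> cyc (a # rest) (f x) < cyc (a # rest) (f y)"
      using vx vy by simp
  qed
qed

lemma univ_lt:
  assumes R: "R \<subseteq> set rest"
  shows "hasdec (<) (cyc (a # B @ rest)) (insert a (insert (last B) R)) (Suc k)
     \<longleftrightarrow> hasdec (<) (cyc (a # B @ rest)) (insert (last B) R) k"
proof -
  have "insert a (insert (last B) R) - {a} = insert (last B) R"
    using R a_notR a_notB lastB_in by auto
  moreover have "hasdec (<) (cyc (a # B @ rest)) (insert a (insert (last B) R)) (Suc k)
     \<longleftrightarrow> hasdec (<) (cyc (a # B @ rest)) (insert a (insert (last B) R) - {a}) k"
  proof (rule hasdec_univ)
    show "a \<in> insert a (insert (last B) R)" by simp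
    show "\<not> a < a" by simp
    fix x assume x: "x \<in> insert a (insert (last B) R) - {a}"
    then have "a < x" using R amin low lastB_in by auto
    moreover have "cyc (a # B @ rest) x < cyc (a # B @ rest) a"
      using plo[of x] x R pa by auto
    ultimately show "decset (<) (cyc (a # B @ rest)) {x, a}" unfolding decset_def by auto
  qed
  ultimately show ?thesis by simp
qed

lemma univ_rot:
  "hasdec (rot a) (cyc (a # B @ rest)) (insert a (set B - {last B})) (Suc k)
     \<longleftrightarrow> hasdec (rot a) (cyc (a # B @ rest)) (set B - {last B}) k"
proof -
  have "insert a (set B - {last B}) - {a} = set B - {last B}" using a_notB by auto
  moreover have "hasdec (rot a) (cyc (a # B @ rest)) (insert a (set B - {last B})) (Suc k)
     \<longleftrightarrow> hasdec (rot a) (cyc (a # B @ rest)) (insert a (set B - {last B}) - {a}) k"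
  proof (rule hasdec_univ)
    show "a \<in> insert a (set B - {last B})" by simp
    show "\<not> rot a a a" by (simp add: rot_def)
    fix x assume x: "x \<in> insert a (set B - {last B}) - {a}"
    then have "rot a x a" "\<not> rot a a x" unfolding rot_def by auto
    moreover have "cyc (a # B @ rest) a < cyc (a # B @ rest) x"
      using pB[of x] x pa by auto
    ultimately show "decset (rot a) (cyc (a # B @ rest)) {x, a}" unfolding decset_def
      using rot_irr by auto
  qed
  ultimately show ?thesis by simp
qed

lemma inc_lt:
  assumes "x \<in> set B" "x \<noteq> last B" "y \<in> insert a (set rest)"
  shows "\<not> decset (<) (cyc (a # B @ rest)) {x, y}"
proof -
  have "y < x" using low assms by auto
  moreover have "cyc (a # B @ rest) y < cyc (a # B @ rest) x" using phi assms by auto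
  ultimately show ?thesis unfolding decset_def by auto
qed

lemma inc_rot:
  assumes "x \<in> insert a (set B - {last B})" "y \<in> set rest"
  shows "\<not> decset (rot a) (cyc (a # B @ rest)) {x, y}"
proof -
  have "rot a y x" using assms low a_notR unfolding rot_def by auto
  moreover have "cyc (a # B @ rest) y < cyc (a # B @ rest) x"
  proof (cases "x = a")
    case True then show ?thesis using plo[of y] assms pa by auto
  next
    case False then show ?thesis using phi[of x y] assms by auto
  qed
  ultimately show ?thesis unfolding decset_def by auto
qed

lemma inc_rot2: "\<not> decset (rot a) (cyc (a # B @ rest)) {last B, a}"
proof -
  have "rot a (last B) a" using a_notB lastB_in unfolding rot_def by auto
  moreover have "cyc (a # B @ rest) (last B) < cyc (a # B @ rest) a" using plo pa by auto
  ultimately show ?thesis unfolding decset_def by auto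
qed

lemma rot_on_B: "x \<in> set B \<Longrightarrow> y \<in> set B \<Longrightarrow> rot a x y \<longleftrightarrow> x < y"
  using a_notB unfolding rot_def by auto

lemma rot_on_R: "x \<in> insert (last B) R \<Longrightarrow> y \<in> insert (last B) R \<Longrightarrow> R \<subseteq> set rest \<Longrightarrow> rot a x y \<longleftrightarrow> x < y"
  using a_notB a_notR lastB_in unfolding rot_def by auto

end


context spl
begin

lemma HaB: "hasdec (rot a) (cyc (a # B @ rest)) (insert a (set B)) k \<longleftrightarrow> D0 B k \<or> DL B (k - 1)"
proof -
  let ?p = "cyc (a # B @ rest)"
  have A: "insert a (set B) = set B \<union> insert a (set B - {last B})" by auto
  have e1: "hasdec (rot a) ?p (insert a (set B)) k \<longleftrightarrow>
      hasdec (rot a) ?p (set B) k \<or> hasdec (rot a) ?p (insert a (set B - {last B})) k"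
  proof (rule hasdec_split[OF A])
    fix x y assume x: "x \<in> set B - insert a (set B - {last B})"
      and y: "y \<in> insert a (set B - {last B}) - set B"
    then have "x = last B" "y = a" using a_notB by auto
    then show "\<not> decset (rot a) ?p {x, y}" using inc_rot2 by simp
  qed
  have e2: "hasdec (rot a) ?p (set B) k \<longleftrightarrow> D0 B k" by (rule HB) (rule rot_on_B)
  have e3: "hasdec (rot a) ?p (insert a (set B - {last B})) k \<longleftrightarrow> DL B (k - 1)"
  proof (cases k)
    case 0 then show ?thesis by (simp add: DL_def)
  next
    case (Suc m)
    have "hasdec (rot a) ?p (insert a (set B - {last B})) k \<longleftrightarrow> hasdec (rot a) ?p (set B - {last B}) m"
      using univ_rot[of m] Suc by simp
    also have "\<dots> \<longleftrightarrow> DL B m" by (rule HBL) (rule rot_on_B)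
    finally show ?thesis using Suc by simp
  qed
  show ?thesis using e1 e2 e3 by blast
qed

lemma rec0: "D0 (a # B @ rest) k \<longleftrightarrow> D0 B k \<or> DR (a # rest) (k - 1)"
proof -
  let ?p = "cyc (a # B @ rest)"
  have A: "set (a # B @ rest) = set B \<union> insert a (insert (last B) (set rest))" using lastB_in by auto
  have e1: "D0 (a # B @ rest) k \<longleftrightarrow>
      hasdec (<) ?p (set B) k \<or> hasdec (<) ?p (insert a (insert (last B) (set rest))) k"
    unfolding D0_def
  proof (rule hasdec_split[OF A])
    fix x y assume x: "x \<in> set B - insert a (insert (last B) (set rest))"
      and y: "y \<in> insert a (insert (last B) (set rest)) - set B"
    then have "x \<in> set B" "x \<noteq> last B" "y \<in> insert a (set rest)" using lastB_in by auto
    then show "\<not> decset (<) ?p {x, y}" by (rule inc_lt)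
  qed
  have e2: "hasdec (<) ?p (set B) k \<longleftrightarrow> D0 B k" by (rule HB) simp
  have e3: "hasdec (<) ?p (insert a (insert (last B) (set rest))) k \<longleftrightarrow> DR (a # rest) (k - 1)"
  proof (cases k)
    case 0 then show ?thesis by (simp add: DR_def)
  next
    case (Suc m)
    have "hasdec (<) ?p (insert a (insert (last B) (set rest))) k
        \<longleftrightarrow> hasdec (<) ?p (insert (last B) (set rest)) m"
      using univ_lt[of "set rest" m] Suc by simp
    also have "\<dots> \<longleftrightarrow> hasdec (rot a) (cyc (a # rest)) (insert a (set rest)) m" by (rule HR) auto
    finally show ?thesis using Suc by (simp add: DR_def)
  qed
  show ?thesis using e1 e2 e3 by blast
qed

lemma recL: "DL (a # B @ rest) k \<longleftrightarrow>
    (if rest = [] then DL B k \<or> k \<le> 1 else D0 B k \<or> DRL (a # rest) (k - 1))"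
proof (cases "rest = []")
  case True
  let ?p = "cyc (a # B @ rest)"
  have A: "set (a # B @ rest) - {last (a # B @ rest)} = (set B - {last B}) \<union> {a}"
    using True a_notB Bne by auto
  have e1: "DL (a # B @ rest) k \<longleftrightarrow> hasdec (<) ?p (set B - {last B}) k \<or> hasdec (<) ?p {a} k"
    unfolding DL_def
  proof (rule hasdec_split[OF A])
    fix x y assume x: "x \<in> set B - {last B} - {a}" and y: "y \<in> {a} - (set B - {last B})"
    then have "x \<in> set B" "x \<noteq> last B" "y \<in> insert a (set rest)" using lastB_in by auto
    then show "\<not> decset (<) ?p {x, y}" by (rule inc_lt)
  qed
  have e2: "hasdec (<) ?p (set B - {last B}) k \<longleftrightarrow> DL B k" by (rule HBL) simp
  have e3: "hasdec (<) ?p {a} k \<longleftrightarrow> k \<le> 1" by (rule hasdec_single) simp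
  show ?thesis using e1 e2 e3 True by simp
next
  case False
  let ?p = "cyc (a # B @ rest)"
  let ?r = "last rest"
  let ?R = "set rest - {?r}"
  have lc: "last (a # B @ rest) = ?r" using False by simp
  have rin: "?r \<in> set rest" using False by simp
  have A: "set (a # B @ rest) - {last (a # B @ rest)} = set B \<union> insert a (insert (last B) ?R)"
    using lc rin lastB_in BR a_notB a_notR by auto
  have e1: "DL (a # B @ rest) k \<longleftrightarrow>
      hasdec (<) ?p (set B) k \<or> hasdec (<) ?p (insert a (insert (last B) ?R)) k"
    unfolding DL_def
  proof (rule hasdec_split[OF A])
    fix x y assume x: "x \<in> set B - insert a (insert (last B) ?R)"
      and y: "y \<in> insert a (insert (last B) ?R) - set B"
    then have "x \<in> set B" "x \<noteq> last B" "y \<in> insert a (set rest)" using lastB_in by auto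
    then show "\<not> decset (<) ?p {x, y}" by (rule inc_lt)
  qed
  have e2: "hasdec (<) ?p (set B) k \<longleftrightarrow> D0 B k" by (rule HB) simp
  have e3: "hasdec (<) ?p (insert a (insert (last B) ?R)) k \<longleftrightarrow> DRL (a # rest) (k - 1)"
  proof (cases k)
    case 0 then show ?thesis by (simp add: DRL_def)
  next
    case (Suc m)
    have "hasdec (<) ?p (insert a (insert (last B) ?R)) k \<longleftrightarrow> hasdec (<) ?p (insert (last B) ?R) m"
      using univ_lt[of ?R m] Suc by auto
    also have "\<dots> \<longleftrightarrow> hasdec (rot a) (cyc (a # rest)) (insert a ?R) m" by (rule HR) auto
    also have "insert a ?R = set (a # rest) - {last (a # rest)}" using False rin a_notR by auto
    finally show ?thesis using Suc by (simp add: DRL_def)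
  qed
  show ?thesis using e1 e2 e3 False by simp
qed

lemma recR: "DR (a # B @ rest) k \<longleftrightarrow> D0 B k \<or> DL B (k - 1) \<or> DR (a # rest) k"
proof -
  let ?p = "cyc (a # B @ rest)"
  have A: "set (a # B @ rest) = insert a (set B) \<union> insert (last B) (set rest)" using lastB_in by auto
  have e1: "DR (a # B @ rest) k \<longleftrightarrow>
      hasdec (rot a) ?p (insert a (set B)) k \<or> hasdec (rot a) ?p (insert (last B) (set rest)) k"
    unfolding DR_def list.sel(1)
  proof (rule hasdec_split[OF A])
    fix x y assume x: "x \<in> insert a (set B) - insert (last B) (set rest)"
      and y: "y \<in> insert (last B) (set rest) - insert a (set B)"
    then have "x \<in> insert a (set B - {last B})" "y \<in> set rest" using lastB_in by auto
    then show "\<not> decset (rot a) ?p {x, y}" by (rule inc_rot)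
  qed
  have e3: "hasdec (rot a) ?p (insert (last B) (set rest)) k \<longleftrightarrow> DR (a # rest) k"
  proof -
    have "hasdec (rot a) ?p (insert (last B) (set rest)) k
        \<longleftrightarrow> hasdec (rot a) (cyc (a # rest)) (insert a (set rest)) k"
      by (rule HR, simp, rule rot_on_R, auto)
    then show ?thesis by (simp add: DR_def)
  qed
  show ?thesis using e1 HaB e3 by blast
qed

lemma recRL: "DRL (a # B @ rest) k \<longleftrightarrow>
    (if rest = [] then DL B (k - 1) else D0 B k \<or> DL B (k - 1) \<or> DRL (a # rest) k)"
proof (cases "rest = []")
  case True
  let ?p = "cyc (a # B @ rest)"
  have A: "set (a # B @ rest) - {last (a # B @ rest)} = insert a (set B - {last B})"
    using True a_notB Bne by auto
  show ?thesis
  proof (cases k)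
    case 0 then show ?thesis by (simp add: DRL_def DL_def)
  next
    case (Suc m)
    have "DRL (a # B @ rest) k \<longleftrightarrow> hasdec (rot a) ?p (insert a (set B - {last B})) (Suc m)"
      unfolding DRL_def A Suc by simp
    also have "\<dots> \<longleftrightarrow> hasdec (rot a) ?p (set B - {last B}) m" by (rule univ_rot)
    also have "\<dots> \<longleftrightarrow> DL B m" by (rule HBL) (rule rot_on_B)
    finally show ?thesis using True Suc by simp
  qed
next
  case False
  let ?p = "cyc (a # B @ rest)"
  let ?r = "last rest"
  let ?R = "set rest - {?r}"
  have lc: "last (a # B @ rest) = ?r" using False by simp
  have rin: "?r \<in> set rest" using False by simp
  have A: "set (a # B @ rest) - {last (a # B @ rest)} = insert a (set B) \<union> insert (last B) ?R"
    using lc rin lastB_in BR a_notB a_notR by auto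
  have e1: "DRL (a # B @ rest) k \<longleftrightarrow>
      hasdec (rot a) ?p (insert a (set B)) k \<or> hasdec (rot a) ?p (insert (last B) ?R) k"
    unfolding DRL_def list.sel(1)
  proof (rule hasdec_split[OF A])
    fix x y assume x: "x \<in> insert a (set B) - insert (last B) ?R"
      and y: "y \<in> insert (last B) ?R - insert a (set B)"
    then have "x \<in> insert a (set B - {last B})" "y \<in> set rest" using lastB_in by auto
    then show "\<not> decset (rot a) ?p {x, y}" by (rule inc_rot)
  qed
  have e3: "hasdec (rot a) ?p (insert (last B) ?R) k \<longleftrightarrow> DRL (a # rest) k"
  proof -
    have "hasdec (rot a) ?p (insert (last B) ?R) k
        \<longleftrightarrow> hasdec (rot a) (cyc (a # rest)) (insert a ?R) k"
      by (rule HR, simp, rule rot_on_R, auto)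
    also have "insert a ?R = set (a # rest) - {last (a # rest)}" using False rin a_notR by auto
    finally show ?thesis by (simp add: DRL_def)
  qed
  show ?thesis using e1 HaB e3 False by simp
qed

end


section \<open>Counting\<close>

definition cnt :: "nat \<Rightarrow> nat \<Rightarrow> (nat list \<Rightarrow> bool) \<Rightarrow> nat" where
  "cnt a n P = card {C. ok {a..<a+n} C \<and> P C}"

lemma finite_ok: "finite {C. ok {a..<a+n} C \<and> P C}"
proof (rule finite_subset)
  show "{C. ok {a..<a+n} C \<and> P C} \<subseteq> {xs. set xs \<subseteq> {a..<a+n} \<and> length xs = n}"
    using ok_length unfolding ok_def by auto
  show "finite {xs. set xs \<subseteq> {a..<a+n} \<and> length xs = n}" by (rule finite_lists_length_eq) simp
qed

lemma ok_tl: "ok {a..<a+j} C' \<Longrightarrow> C' = a # tl C'"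
  using ok_hd[of a j C'] unfolding ok_def by (cases C') auto

lemma spl_of_ok:
  assumes okB: "ok {a+j..<a+n} B" and okR: "ok {a..<a+j} (a # rest)" and j: "1 \<le> j" "j < n"
  shows "spl a B rest"
proof
  show "distinct (a # B @ rest)" using ok_join[OF assms] unfolding ok_def by blast
  show "B \<noteq> []" using okB unfolding ok_def by blast
  have sB: "set B = {a+j..<a+n}" using okB unfolding ok_def by blast
  have sR: "set (a # rest) = {a..<a+j}" using okR unfolding ok_def by blast
  show "\<And>x z. x \<in> set B \<Longrightarrow> z \<in> set (a # rest) \<Longrightarrow> z < x"
  proof -
    fix x z assume "x \<in> set B" "z \<in> set (a # rest)"
    then have "x \<in> {a+j..<a+n}" "z \<in> {a..<a+j}" using sB sR by blast+
    then show "z < x" by auto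
  qed
  show "\<And>x. x \<in> set B \<Longrightarrow> hd B \<le> x" using okB unfolding ok_def by blast
  have "distinct (a # rest)" using okR unfolding ok_def by blast
  then show "\<And>z. z \<in> set rest \<Longrightarrow> a < z"
  proof -
    fix z assume "distinct (a # rest)" "z \<in> set rest"
    then have "z \<noteq> a" "z \<in> {a..<a+j}" using sR by auto
    then show "a < z" by auto
  qed
qed

lemma cnt_rec:
  assumes n: "2 \<le> n"
    and eq: "\<And>j B rest. 1 \<le> j \<Longrightarrow> j < n \<Longrightarrow> ok {a+j..<a+n} B \<Longrightarrow> ok {a..<a+j} (a # rest)
               \<Longrightarrow> (P (a # B @ rest) \<longleftrightarrow> P1 j B \<and> P2 j (a # rest))"
  shows "cnt a n P = (\<Sum>j\<in>{1..<n}. cnt (a+j) (n-j) (P1 j) * cnt a j (P2 j))"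
proof -
  define T where "T j = {B. ok {a+j..<a+n} B \<and> P1 j B} \<times> {C'. ok {a..<a+j} C' \<and> P2 j C'}" for j
  define g where "g = (\<lambda>(B, C'). hd C' # B @ tl C' :: nat list)"
  have S: "{C. ok {a..<a+n} C \<and> P C} = (\<Union>j\<in>{1..<n}. g ` T j)"
  proof
    show "{C. ok {a..<a+n} C \<and> P C} \<subseteq> (\<Union>j\<in>{1..<n}. g ` T j)"
    proof
      fix C assume C: "C \<in> {C. ok {a..<a+n} C \<and> P C}"
      then obtain B rest where sp: "C = a # B @ rest" "B \<noteq> []"
        "ok {a + Suc (length rest)..<a+n} B" "ok {a..<a + Suc (length rest)} (a # rest)"
        using ok_split[of a n C] n by auto
      define j where "j = Suc (length rest)"
      have "length C = n" using C ok_length by auto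
      then have jn: "1 \<le> j" "j < n" using sp(1,2) unfolding j_def by auto
      have "P1 j B \<and> P2 j (a # rest)" using eq[OF jn] sp C unfolding j_def by auto
      then have "(B, a # rest) \<in> T j" unfolding T_def using sp unfolding j_def by auto
      moreover have "C = g (B, a # rest)" unfolding g_def using sp by simp
      ultimately show "C \<in> (\<Union>j\<in>{1..<n}. g ` T j)" using jn by auto
    qed
    show "(\<Union>j\<in>{1..<n}. g ` T j) \<subseteq> {C. ok {a..<a+n} C \<and> P C}"
    proof
      fix C assume "C \<in> (\<Union>j\<in>{1..<n}. g ` T j)"
      then obtain j B C' where j: "j \<in> {1..<n}" "(B, C') \<in> T j" "C = g (B, C')" by auto
      have okB: "ok {a+j..<a+n} B" "P1 j B" and okC': "ok {a..<a+j} C'" "P2 j C'"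
        using j(2) unfolding T_def by auto
      have C'e: "C' = a # tl C'" using ok_tl[OF okC'(1)] .
      have C: "C = a # B @ tl C'" using j(3) C'e unfolding g_def by (metis case_prod_conv list.sel(1))
      have jn: "1 \<le> j" "j < n" using j(1) by auto
      have okR: "ok {a..<a+j} (a # tl C')" using okC' C'e by simp
      have "ok {a..<a+n} C" using ok_join[OF okB(1) okR jn] C by simp
      moreover have "P C" using eq[OF jn okB(1) okR] okB(2) okC'(2) C'e C by simp
      ultimately show "C \<in> {C. ok {a..<a+n} C \<and> P C}" by simp
    qed
  qed
  have fin: "\<forall>j\<in>{1..<n}. finite (g ` T j)"
  proof
    fix j assume j: "j \<in> {1..<n}"
    then have e: "a + n = (a + j) + (n - j)" by auto
    have "finite {B. ok {a+j..<a+n} B \<and> P1 j B}" unfolding e by (rule finite_ok)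
    moreover have "finite {C'. ok {a..<a+j} C' \<and> P2 j C'}" by (rule finite_ok)
    ultimately show "finite (g ` T j)" unfolding T_def by simp
  qed
  have disj: "\<forall>i\<in>{1..<n}. \<forall>j\<in>{1..<n}. i \<noteq> j \<longrightarrow> g ` T i \<inter> g ` T j = {}"
  proof (intro ballI impI)
    fix i j assume i: "i \<in> {1..<n}" and j: "j \<in> {1..<n}" and ij: "i \<noteq> j"
    show "g ` T i \<inter> g ` T j = {}"
    proof (rule ccontr)
      assume "g ` T i \<inter> g ` T j \<noteq> {}"
      then obtain c where "c \<in> g ` T i" "c \<in> g ` T j" by blast
      then obtain x y where xy: "x \<in> T i" "y \<in> T j" "g x = g y" by (metis imageE)
      obtain B1 C1 where x': "x = (B1, C1)" by (cases x)
      obtain B2 C2 where y': "y = (B2, C2)" by (cases y)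
      have m: "(B1, C1) \<in> T i" "(B2, C2) \<in> T j" "g (B1, C1) = g (B2, C2)" using xy x' y' by auto
      have o1: "ok {a+i..<a+n} B1" and o2: "ok {a+j..<a+n} B2" using m unfolding T_def by auto
      have "hd B1 = a + i" using ok_hd(1)[of "a+i" "n-i" B1] o1 i by auto
      moreover have "hd B2 = a + j" using ok_hd(1)[of "a+j" "n-j" B2] o2 j by auto
      moreover have "B1 \<noteq> []" "B2 \<noteq> []" using o1 o2 unfolding ok_def by auto
      moreover have "B1 @ tl C1 = B2 @ tl C2" using m(3) unfolding g_def by simp
      ultimately have "a + i = a + j" by (metis hd_append2)
      then show False using ij by simp
    qed
  qed
  have inj: "inj_on g (T j)" if j: "j \<in> {1..<n}" for j
  proof
    fix x y assume x: "x \<in> T j" and y: "y \<in> T j" and e: "g x = g y"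
    obtain B1 C1 where x': "x = (B1, C1)" by (cases x)
    obtain B2 C2 where y': "y = (B2, C2)" by (cases y)
    have o1: "ok {a+j..<a+n} B1" "ok {a..<a+j} C1" and o2: "ok {a+j..<a+n} B2" "ok {a..<a+j} C2"
      using x y x' y' unfolding T_def by auto
    have l: "length B1 = length B2" using ok_length[of "a+j" "n-j"] o1(1) o2(1) j by auto
    have "B1 @ tl C1 = B2 @ tl C2" using e x' y' unfolding g_def by simp
    then have "B1 = B2" "tl C1 = tl C2" using l by auto
    moreover have "C1 = a # tl C1" "C2 = a # tl C2" using ok_tl o1(2) o2(2) by auto
    ultimately show "x = y" using x' y' by metis
  qed
  have "cnt a n P = card (\<Union>j\<in>{1..<n}. g ` T j)" unfolding cnt_def S ..
  also have "\<dots> = (\<Sum>j\<in>{1..<n}. card (g ` T j))" by (rule card_UN_disjoint) (use fin disj in auto)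
  also have "\<dots> = (\<Sum>j\<in>{1..<n}. card (T j))" using inj card_image by (intro sum.cong) auto
  also have "\<dots> = (\<Sum>j\<in>{1..<n}. cnt (a+j) (n-j) (P1 j) * cnt a j (P2 j))"
  proof (intro sum.cong refl)
    fix j assume j: "j \<in> {1..<n}"
    have "a + j + (n - j) = a + n" using j by auto
    then show "card (T j) = cnt (a+j) (n-j) (P1 j) * cnt a j (P2 j)"
      unfolding T_def cnt_def card_cartesian_product by simp
  qed
  finally show ?thesis .
qed

lemma cnt_zero: "cnt a 0 P = 0"
  unfolding cnt_def ok_def by simp

lemma cnt_one: "cnt a 1 P = (if P [a] then 1 else 0)"
proof -
  have "{C. ok {a..<a+1} C \<and> P C} = (if P [a] then {[a]} else {})" using ok_single by auto
  then show ?thesis unfolding cnt_def by simp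
qed


section \<open>Predicates and recurrences\<close>

definition PF :: "nat \<Rightarrow> nat list \<Rightarrow> bool" where "PF k C \<longleftrightarrow> \<not> D0 C k"
definition PP :: "nat \<Rightarrow> nat list \<Rightarrow> bool" where "PP k C \<longleftrightarrow> \<not> DR C k"
definition PG :: "nat \<Rightarrow> nat list \<Rightarrow> bool" where "PG k C \<longleftrightarrow> \<not> D0 C k \<and> \<not> DL C (k - 1)"
definition PQ :: "nat \<Rightarrow> nat list \<Rightarrow> bool" where "PQ k C \<longleftrightarrow> \<not> DR C (k - 1) \<and> \<not> DRL C (k - 2)"

lemma base_single:
  "PF k [a] \<longleftrightarrow> 2 \<le> k" "PP k [a] \<longleftrightarrow> 2 \<le> k" "PG k [a] \<longleftrightarrow> 2 \<le> k" "PQ k [a] \<longleftrightarrow> 3 \<le> k"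
  unfolding PF_def PP_def PG_def PQ_def stats_single by auto

context spl
begin

lemma eqF: "PF k (a # B @ rest) \<longleftrightarrow> PF k B \<and> PP (k - 1) (a # rest)"
  unfolding PF_def PP_def rec0 by simp

lemma eqP: "PP k (a # B @ rest) \<longleftrightarrow> PG k B \<and> PP k (a # rest)"
  unfolding PG_def PP_def recR by simp

lemma eqG: "PG k (a # B @ rest) \<longleftrightarrow>
    (if rest = [] then PG k B \<and> 3 \<le> k else PF (k - 1) B) \<and> (rest = [] \<or> PQ k (a # rest))"
proof (cases "rest = []")
  case True
  have "D0 (a # B @ rest) k \<longleftrightarrow> D0 B k \<or> k - 1 \<le> 1" using rec0[of k] True stats_single by simp
  moreover have "DL (a # B @ rest) (k - 1) \<longleftrightarrow> DL B (k - 1) \<or> k - 1 \<le> 1" using recL[of "k - 1"] True by simp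
  ultimately show ?thesis unfolding PG_def using True by auto
next
  case False
  have m: "D0 B k \<Longrightarrow> D0 B (k - 1)" by (erule D0_le) simp
  have "D0 (a # B @ rest) k \<longleftrightarrow> D0 B k \<or> DR (a # rest) (k - 1)" using rec0[of k] by simp
  moreover have "DL (a # B @ rest) (k - 1) \<longleftrightarrow> D0 B (k - 1) \<or> DRL (a # rest) (k - 2)"
    using recL[of "k - 1"] False by (simp add: diff_diff_left numeral_2_eq_2 numeral_3_eq_3)
  ultimately show ?thesis unfolding PG_def PF_def PQ_def using False m by auto
qed

lemma eqQ: "PQ k (a # B @ rest) \<longleftrightarrow> (PG (k - 2) B \<and> 3 \<le> k) \<and> (rest = [] \<or> PQ k (a # rest))"
proof -
  have r1: "DR (a # B @ rest) (k - 1) \<longleftrightarrow> D0 B (k - 1) \<or> DL B (k - 2) \<or> DR (a # rest) (k - 1)"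
    using recR[of "k - 1"] by (simp add: diff_diff_left numeral_2_eq_2 numeral_3_eq_3)
  have r2: "DRL (a # B @ rest) (k - 2) \<longleftrightarrow> (if rest = [] then DL B (k - 3)
      else D0 B (k - 2) \<or> DL B (k - 3) \<or> DRL (a # rest) (k - 2))"
    using recRL[of "k - 2"] by (simp add: diff_diff_left numeral_2_eq_2 numeral_3_eq_3)
  have m1: "D0 B (k - 1) \<Longrightarrow> D0 B (k - 2)" by (erule D0_le) simp
  have m2: "DL B (k - 2) \<Longrightarrow> DL B (k - 3)" by (erule DL_le) simp
  have m3: "3 \<le> k \<Longrightarrow> D0 B (k - 2) \<Longrightarrow> DL B (k - 3)"
  proof -
    assume "3 \<le> k" "D0 B (k - 2)"
    moreover have "Suc (k - 3) = k - 2" using \<open>3 \<le> k\<close> by simp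
    ultimately have "D0 B (Suc (k - 3))" by simp
    then show "DL B (k - 3)" by (rule D0_DL)
  qed
  have m4: "D0 B (k - 1) \<Longrightarrow> D0 B (k - 2)" by (erule D0_le) simp
  have pg: "PG (k - 2) B \<longleftrightarrow> \<not> D0 B (k - 2) \<and> \<not> DL B (k - 3)"
    unfolding PG_def by (simp add: diff_diff_left numeral_2_eq_2 numeral_3_eq_3)
  have q0: "k < 3 \<Longrightarrow> \<not> PQ k (a # rest)"
    unfolding PQ_def DRL_def by simp
  show ?thesis
  proof (cases "3 \<le> k")
    case False
    then have "DRL (a # B @ rest) (k - 2)" unfolding DRL_def by simp
    then show ?thesis using False unfolding PQ_def by simp
  next
    case k3: True
    have m3': "D0 B (k - 2) \<Longrightarrow> DL B (k - 3)" using m3 k3 by blast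
    show ?thesis
    proof (cases "rest = []")
      case True
      have "DR (a # rest) (k - 1) \<longleftrightarrow> False" using True stats_single k3 by simp
      then show ?thesis unfolding PQ_def pg using r1 r2 True m1 m2 m3' m4 k3 by auto
    next
      case False
      show ?thesis unfolding PQ_def pg using r1 r2 False m1 m2 m3' m4 k3 unfolding PQ_def by auto
    qed
  qed
qed

end

lemma eq_ok:
  assumes "1 \<le> j" "j < n" "ok {a+j..<a+n} B" "ok {a..<a+j} (a # rest)"
  shows "spl a B rest" "rest = [] \<longleftrightarrow> j = 1"
proof -
  show "spl a B rest" using spl_of_ok assms by blast
  have "length (a # rest) = j" using ok_length assms(4) by blast
  then show "rest = [] \<longleftrightarrow> j = 1" by auto
qed

lemma cntF: "2 \<le> n \<Longrightarrow> cnt a n (PF k) = (\<Sum>j\<in>{1..<n}. cnt (a+j) (n-j) (PF k) * cnt a j (PP (k - 1)))"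
  by (rule cnt_rec) (use eq_ok spl.eqF in blast)+

lemma cntP: "2 \<le> n \<Longrightarrow> cnt a n (PP k) = (\<Sum>j\<in>{1..<n}. cnt (a+j) (n-j) (PG k) * cnt a j (PP k))"
  by (rule cnt_rec) (use eq_ok spl.eqP in blast)+

lemma cnt_and_const: "cnt a n (\<lambda>C. P C \<and> c) = (if c then cnt a n P else 0)"
  unfolding cnt_def by auto

lemma cnt_true1: "cnt a 1 (\<lambda>C. True) = 1"
  using cnt_one by simp

lemma cntG: "2 \<le> n \<Longrightarrow> cnt a n (PG k) = (\<Sum>j\<in>{1..<n}.
    (if j = 1 then (if 3 \<le> k then cnt (a+1) (n-1) (PG k) else 0)
     else cnt (a+j) (n-j) (PF (k - 1)) * cnt a j (PQ k)))"
proof -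
  assume n: "2 \<le> n"
  have "cnt a n (PG k) = (\<Sum>j\<in>{1..<n}. cnt (a+j) (n-j) (\<lambda>B. if j = 1 then PG k B \<and> 3 \<le> k else PF (k - 1) B)
      * cnt a j (\<lambda>C'. j = 1 \<or> PQ k C'))"
  proof (rule cnt_rec[OF n])
    fix j B rest assume h: "1 \<le> j" "j < n" "ok {a+j..<a+n} B" "ok {a..<a+j} (a # rest)"
    show "PG k (a # B @ rest) \<longleftrightarrow> (if j = 1 then PG k B \<and> 3 \<le> k else PF (k - 1) B) \<and> (j = 1 \<or> PQ k (a # rest))"
      using spl.eqG[OF eq_ok(1)[OF h]] eq_ok(2)[OF h] by simp
  qed
  also have "\<dots> = (\<Sum>j\<in>{1..<n}.
    (if j = 1 then (if 3 \<le> k then cnt (a+1) (n-1) (PG k) else 0)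
     else cnt (a+j) (n-j) (PF (k - 1)) * cnt a j (PQ k)))"
  proof (intro sum.cong refl)
    fix j assume "j \<in> {1..<n}"
    show "cnt (a+j) (n-j) (\<lambda>B. if j = 1 then PG k B \<and> 3 \<le> k else PF (k - 1) B)
      * cnt a j (\<lambda>C'. j = 1 \<or> PQ k C') = (if j = 1 then (if 3 \<le> k then cnt (a+1) (n-1) (PG k) else 0)
     else cnt (a+j) (n-j) (PF (k - 1)) * cnt a j (PQ k))"
    proof (cases "j = 1")
      case True then show ?thesis using cnt_and_const[of "a+1" "n-1" "PG k" "3 \<le> k"] cnt_true1 by simp
    next
      case False then show ?thesis by simp
    qed
  qed
  finally show ?thesis .
qed

lemma cntQ: "2 \<le> n \<Longrightarrow> cnt a n (PQ k) = (\<Sum>j\<in>{1..<n}.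
    (if 3 \<le> k then cnt (a+j) (n-j) (PG (k - 2)) * (if j = 1 then 1 else cnt a j (PQ k)) else 0))"
proof -
  assume n: "2 \<le> n"
  have "cnt a n (PQ k) = (\<Sum>j\<in>{1..<n}. cnt (a+j) (n-j) (\<lambda>B. PG (k - 2) B \<and> 3 \<le> k)
      * cnt a j (\<lambda>C'. j = 1 \<or> PQ k C'))"
  proof (rule cnt_rec[OF n])
    fix j B rest assume h: "1 \<le> j" "j < n" "ok {a+j..<a+n} B" "ok {a..<a+j} (a # rest)"
    show "PQ k (a # B @ rest) \<longleftrightarrow> (PG (k - 2) B \<and> 3 \<le> k) \<and> (j = 1 \<or> PQ k (a # rest))"
      using spl.eqQ[OF eq_ok(1)[OF h]] eq_ok(2)[OF h] by simp
  qed
  also have "\<dots> = (\<Sum>j\<in>{1..<n}.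
    (if 3 \<le> k then cnt (a+j) (n-j) (PG (k - 2)) * (if j = 1 then 1 else cnt a j (PQ k)) else 0))"
  proof (intro sum.cong refl)
    fix j assume "j \<in> {1..<n}"
    show "cnt (a+j) (n-j) (\<lambda>B. PG (k - 2) B \<and> 3 \<le> k) * cnt a j (\<lambda>C'. j = 1 \<or> PQ k C')
      = (if 3 \<le> k then cnt (a+j) (n-j) (PG (k - 2)) * (if j = 1 then 1 else cnt a j (PQ k)) else 0)"
      using cnt_and_const[of "a+j" "n-j" "PG (k - 2)" "3 \<le> k"] cnt_true1 by (cases "j = 1") auto
  qed
  finally show ?thesis .
qed

lemma cnt_indep:
  "\<forall>a k. cnt a n (PF k) = cnt 0 n (PF k) \<and> cnt a n (PP k) = cnt 0 n (PP k)
       \<and> cnt a n (PG k) = cnt 0 n (PG k) \<and> cnt a n (PQ k) = cnt 0 n (PQ k)"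
proof (induction n rule: less_induct)
  case (less n)
  consider "n = 0" | "n = 1" | "2 \<le> n" by linarith
  then show ?case
  proof cases
    case 1 then show ?thesis by (simp add: cnt_zero)
  next
    case 2 show ?thesis unfolding 2 cnt_one base_single by simp
  next
    case 3
    have IH: "\<And>m a k. m < n \<Longrightarrow> cnt a m (PF k) = cnt 0 m (PF k) \<and> cnt a m (PP k) = cnt 0 m (PP k)
       \<and> cnt a m (PG k) = cnt 0 m (PG k) \<and> cnt a m (PQ k) = cnt 0 m (PQ k)"
      using less.IH by blast
    have eF: "\<And>m b k. m < n \<Longrightarrow> cnt b m (PF k) = cnt 0 m (PF k)" using IH by blast
    have eP: "\<And>m b k. m < n \<Longrightarrow> cnt b m (PP k) = cnt 0 m (PP k)" using IH by blast
    have eG: "\<And>m b k. m < n \<Longrightarrow> cnt b m (PG k) = cnt 0 m (PG k)" using IH by blast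
    have eQ: "\<And>m b k. m < n \<Longrightarrow> cnt b m (PQ k) = cnt 0 m (PQ k)" using IH by blast
    show ?thesis
    proof (intro allI conjI)
      fix a k
      show "cnt a n (PF k) = cnt 0 n (PF k)"
        unfolding cntF[OF 3]
      proof (intro sum.cong refl)
        fix j assume "j \<in> {1..<n}"
        then have l: "n - j < n" "j < n" by auto
        show "cnt (a+j) (n-j) (PF k) * cnt a j (PP (k - 1)) = cnt (0+j) (n-j) (PF k) * cnt 0 j (PP (k - 1))"
          using eF[OF l(1), of "a+j"] eF[OF l(1), of "0+j"] eP[OF l(2), of a] by simp
      qed
      show "cnt a n (PP k) = cnt 0 n (PP k)"
        unfolding cntP[OF 3]
      proof (intro sum.cong refl)
        fix j assume "j \<in> {1..<n}"
        then have l: "n - j < n" "j < n" by auto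
        show "cnt (a+j) (n-j) (PG k) * cnt a j (PP k) = cnt (0+j) (n-j) (PG k) * cnt 0 j (PP k)"
          using eG[OF l(1), of "a+j"] eG[OF l(1), of "0+j"] eP[OF l(2), of a] by simp
      qed
      show "cnt a n (PG k) = cnt 0 n (PG k)"
        unfolding cntG[OF 3]
      proof (intro sum.cong refl)
        fix j assume "j \<in> {1..<n}"
        then have l: "n - j < n" "j < n" "n - 1 < n" by auto
        show "(if j = 1 then (if 3 \<le> k then cnt (a+1) (n-1) (PG k) else 0)
             else cnt (a+j) (n-j) (PF (k - 1)) * cnt a j (PQ k)) =
            (if j = 1 then (if 3 \<le> k then cnt (0+1) (n-1) (PG k) else 0)
             else cnt (0+j) (n-j) (PF (k - 1)) * cnt 0 j (PQ k))"
          using eG[OF l(3), of "a+1"] eG[OF l(3), of "0+1"] eF[OF l(1), of "a+j"] eF[OF l(1), of "0+j"]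
            eQ[OF l(2), of a] by simp
      qed
      show "cnt a n (PQ k) = cnt 0 n (PQ k)"
        unfolding cntQ[OF 3]
      proof (intro sum.cong refl)
        fix j assume "j \<in> {1..<n}"
        then have l: "n - j < n" "j < n" by auto
        show "(if 3 \<le> k then cnt (a+j) (n-j) (PG (k - 2)) * (if j = 1 then 1 else cnt a j (PQ k)) else 0) =
            (if 3 \<le> k then cnt (0+j) (n-j) (PG (k - 2)) * (if j = 1 then 1 else cnt 0 j (PQ k)) else 0)"
          using eG[OF l(1), of "a+j"] eG[OF l(1), of "0+j"] eQ[OF l(2), of a] by simp
      qed
    qed
  qed
qed


section \<open>Power series\<close>

definition sF :: "nat \<Rightarrow> nat \<Rightarrow> real" where "sF k n = real (cnt 0 n (PF k))"
definition sP :: "nat \<Rightarrow> nat \<Rightarrow> real" where "sP k n = real (cnt 0 n (PP k))"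
definition sG :: "nat \<Rightarrow> nat \<Rightarrow> real" where "sG k n = real (cnt 0 n (PG k))"
definition sQ :: "nat \<Rightarrow> nat \<Rightarrow> real" where "sQ k n = real (cnt 0 n (PQ k))"

definition fF :: "nat \<Rightarrow> real fps" where "fF k = Abs_fps (sF k)"
definition fP :: "nat \<Rightarrow> real fps" where "fP k = Abs_fps (sP k)"
definition fG :: "nat \<Rightarrow> real fps" where "fG k = Abs_fps (sG k)"
definition fQ :: "nat \<Rightarrow> real fps" where "fQ k = Abs_fps (sQ k)"

lemma s_zero [simp]: "sF k 0 = 0" "sP k 0 = 0" "sG k 0 = 0" "sQ k 0 = 0"
  unfolding sF_def sP_def sG_def sQ_def by (simp_all add: cnt_zero)

lemma s_one: "sF k 1 = (if 2 \<le> k then 1 else 0)" "sP k 1 = (if 2 \<le> k then 1 else 0)"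
  "sG k 1 = (if 2 \<le> k then 1 else 0)" "sQ k 1 = (if 3 \<le> k then 1 else 0)"
  unfolding sF_def sP_def sG_def sQ_def cnt_one base_single by simp_all

lemmas s_one_Suc = s_one[unfolded One_nat_def]

lemma cnt_shift: "cnt a n (PF k) = cnt 0 n (PF k)" "cnt a n (PP k) = cnt 0 n (PP k)"
  "cnt a n (PG k) = cnt 0 n (PG k)" "cnt a n (PQ k) = cnt 0 n (PQ k)"
  using cnt_indep[of n] by blast+

lemma cnt_shift_nz: "a \<noteq> 0 \<Longrightarrow> cnt a n (PF k) = cnt 0 n (PF k)"
  "a \<noteq> 0 \<Longrightarrow> cnt a n (PP k) = cnt 0 n (PP k)"
  "a \<noteq> 0 \<Longrightarrow> cnt a n (PG k) = cnt 0 n (PG k)" "a \<noteq> 0 \<Longrightarrow> cnt a n (PQ k) = cnt 0 n (PQ k)"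
  using cnt_shift by blast+

lemma fps_conv:
  fixes u v :: "nat \<Rightarrow> real"
  assumes "u 0 = 0" "v 0 = 0"
  shows "fps_nth (Abs_fps u * Abs_fps v) n = (\<Sum>j\<in>{1..<n}. u j * v (n - j))"
proof -
  have "fps_nth (Abs_fps u * Abs_fps v) n = (\<Sum>i=0..n. u i * v (n - i))" by (simp add: fps_mult_nth)
  also have "\<dots> = (\<Sum>j\<in>{1..<n}. u j * v (n - j))"
  proof (rule sum.mono_neutral_cong_right)
    show "finite {0..n}" by simp
    show "{1..<n} \<subseteq> {0..n}" by auto
    show "\<forall>i\<in>{0..n} - {1..<n}. u i * v (n - i) = 0"
    proof
      fix i assume "i \<in> {0..n} - {1..<n}"
      then have "i = 0 \<or> i = n" by auto
      then show "u i * v (n - i) = 0" using assms by auto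
    qed
  qed simp
  finally show ?thesis .
qed

lemma F_eq: assumes "2 \<le> k" shows "fF k = fps_X + fP (k - 1) * fF k"
proof (rule fps_ext)
  fix n :: nat
  consider "n = 0" | "n = 1" | "2 \<le> n" by linarith
  then show "fps_nth (fF k) n = fps_nth (fps_X + fP (k - 1) * fF k) n"
  proof cases
    case 1 then show ?thesis unfolding fF_def fP_def by simp
  next
    case 2 then show ?thesis unfolding fF_def fP_def fps_add_nth fps_conv[where u="sP (k - 1)" and v="sF k", OF s_zero(2) s_zero(1)]
      using assms by (simp add: s_one s_one_Suc)
  next
    case 3
    have "fps_nth (fF k) n = (\<Sum>j\<in>{1..<n}. sP (k - 1) j * sF k (n - j))"
      unfolding fF_def sF_def sP_def fps_nth_Abs_fps cntF[OF 3] of_nat_sum of_nat_mult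
      by (intro sum.cong refl) (auto simp: cnt_shift_nz)
    then show ?thesis unfolding fF_def fP_def fps_add_nth fps_conv[where u="sP (k - 1)" and v="sF k", OF s_zero(2) s_zero(1)] using 3 by simp
  qed
qed

lemma P_eq: assumes "2 \<le> k" shows "fP k = fps_X + fP k * fG k"
proof (rule fps_ext)
  fix n :: nat
  consider "n = 0" | "n = 1" | "2 \<le> n" by linarith
  then show "fps_nth (fP k) n = fps_nth (fps_X + fP k * fG k) n"
  proof cases
    case 1 then show ?thesis unfolding fG_def fP_def by simp
  next
    case 2 then show ?thesis unfolding fG_def fP_def fps_add_nth fps_conv[where u="sP k" and v="sG k", OF s_zero(2) s_zero(3)]
      using assms by (simp add: s_one s_one_Suc)
  next
    case 3
    have "fps_nth (fP k) n = (\<Sum>j\<in>{1..<n}. sP k j * sG k (n - j))"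
      unfolding fP_def sG_def sP_def fps_nth_Abs_fps cntP[OF 3] of_nat_sum of_nat_mult
      by (intro sum.cong refl) (auto simp: cnt_shift_nz)
    then show ?thesis unfolding fG_def fP_def fps_add_nth fps_conv[where u="sP k" and v="sG k", OF s_zero(2) s_zero(3)] using 3 by simp
  qed
qed

definition X3 :: "nat \<Rightarrow> real fps" where "X3 k = (if 3 \<le> k then fps_X else 0)"

lemma X3_Abs: "X3 k = Abs_fps (\<lambda>j. if j = 1 \<and> 3 \<le> k then 1 else 0)"
  unfolding X3_def by (rule fps_ext) auto

lemma Q'_Abs: "fQ k - X3 k = Abs_fps (\<lambda>j. if j = 1 then 0 else sQ k j)"
  unfolding X3_def fQ_def by (rule fps_ext) (auto simp: s_one s_one_Suc)

lemma G_eq: assumes "2 \<le> k" shows "fG k = fps_X + X3 k * fG k + (fQ k - X3 k) * fF (k - 1)"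
proof (rule fps_ext)
  fix n :: nat
  have c1: "fps_nth (Abs_fps (\<lambda>j::nat. if j = 1 \<and> 3 \<le> k then 1 else 0 :: real) * Abs_fps (sG k)) n
      = (\<Sum>j\<in>{1..<n}. (if j = 1 \<and> 3 \<le> k then 1 else 0) * sG k (n - j))"
    by (rule fps_conv) simp_all
  have c2: "fps_nth (Abs_fps (\<lambda>j. if j = 1 then 0 else sQ k j) * Abs_fps (sF (k - 1))) n
      = (\<Sum>j\<in>{1..<n}. (if j = 1 then 0 else sQ k j) * sF (k - 1) (n - j))"
    by (rule fps_conv) simp_all
  consider "n = 0" | "n = 1" | "2 \<le> n" by linarith
  then show "fps_nth (fG k) n = fps_nth (fps_X + X3 k * fG k + (fQ k - X3 k) * fF (k - 1)) n"
  proof cases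
    case 1 then show ?thesis unfolding Q'_Abs unfolding fG_def fF_def X3_Abs by simp
  next
    case 2 then show ?thesis unfolding Q'_Abs unfolding fG_def fF_def X3_Abs fps_add_nth c1 c2
      using assms by (simp add: s_one s_one_Suc)
  next
    case 3
    have "fps_nth (fG k) n = (\<Sum>j\<in>{1..<n}. (if j = 1 \<and> 3 \<le> k then 1 else 0) * sG k (n - j)
         + (if j = 1 then 0 else sQ k j) * sF (k - 1) (n - j))"
      unfolding fG_def sG_def sF_def sQ_def fps_nth_Abs_fps cntG[OF 3] of_nat_sum
      by (intro sum.cong refl) (auto simp: cnt_shift_nz)
    also have "\<dots> = (\<Sum>j\<in>{1..<n}. (if j = 1 \<and> 3 \<le> k then 1 else 0) * sG k (n - j))
         + (\<Sum>j\<in>{1..<n}. (if j = 1 then 0 else sQ k j) * sF (k - 1) (n - j))"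
      by (rule sum.distrib)
    finally show ?thesis unfolding Q'_Abs unfolding fG_def fF_def X3_Abs fps_add_nth c1 c2 using 3 by simp
  qed
qed

lemma Q_eq: assumes "3 \<le> k" shows "fQ k = fps_X + fQ k * fG (k - 2)"
proof (rule fps_ext)
  fix n :: nat
  consider "n = 0" | "n = 1" | "2 \<le> n" by linarith
  then show "fps_nth (fQ k) n = fps_nth (fps_X + fQ k * fG (k - 2)) n"
  proof cases
    case 1 then show ?thesis unfolding fG_def fQ_def by simp
  next
    case 2 then show ?thesis unfolding fG_def fQ_def fps_add_nth fps_conv[where u="sQ k" and v="sG (k - 2)", OF s_zero(4) s_zero(3)]
      using assms by (simp add: s_one s_one_Suc)
  next
    case 3
    have "fps_nth (fQ k) n = (\<Sum>j\<in>{1..<n}. sQ k j * sG (k - 2) (n - j))"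
      unfolding fQ_def sG_def sQ_def fps_nth_Abs_fps cntQ[OF 3] of_nat_sum
    proof (intro sum.cong refl)
      fix j assume "j \<in> {1..<n}"
      show "real (if 3 \<le> k then cnt (0 + j) (n - j) (PG (k - 2)) * (if j = 1 then 1 else cnt 0 j (PQ k)) else 0)
          = real (cnt 0 j (PQ k)) * real (cnt 0 (n - j) (PG (k - 2)))"
        using assms cnt_shift(3)[of j "n - j" "k - 2"] s_one(4)[of k] unfolding sQ_def
        by (cases "j = 1") auto
    qed
    then show ?thesis unfolding fG_def fQ_def fps_add_nth fps_conv[where u="sQ k" and v="sG (k - 2)", OF s_zero(4) s_zero(3)] using 3 by simp
  qed
qed


lemma hasdec_one: "x \<in> A \<Longrightarrow> \<not> lt x x \<Longrightarrow> hasdec lt v A 1"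
  using hasdec_single[of lt x v 1] hasdec_mono_set[of lt v "{x}" 1 A] by auto

lemma cnt_none: "(\<And>C. ok {a..<a+n} C \<Longrightarrow> \<not> P C) \<Longrightarrow> cnt a n P = 0"
proof -
  assume h: "\<And>C. ok {a..<a+n} C \<Longrightarrow> \<not> P C"
  have e: "{C. ok {a..<a+n} C \<and> P C} = {}" using h by blast
  show ?thesis unfolding cnt_def e by (rule card.empty)
qed

lemma ok_ne: "ok V C \<Longrightarrow> hd C \<in> set C"
  unfolding ok_def by auto

lemma fF1: "fF 1 = 0"
proof -
  have "cnt 0 n (PF 1) = 0" for n
  proof (rule cnt_none)
    fix C assume "ok {0..<0+n} C"
    then have "hd C \<in> set C" by (rule ok_ne)
    then have "hasdec (<) (cyc C) (set C) 1" by (rule hasdec_one) simp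
    then show "\<not> PF 1 C" unfolding PF_def D0_def by simp
  qed
  then show ?thesis unfolding fF_def sF_def by (intro fps_ext) simp
qed

lemma fP1: "fP 1 = 0"
proof -
  have "cnt 0 n (PP 1) = 0" for n
  proof (rule cnt_none)
    fix C assume "ok {0..<0+n} C"
    then have "hd C \<in> set C" by (rule ok_ne)
    then have "hasdec (rot (hd C)) (cyc C) (set C) 1" by (rule hasdec_one) (simp add: rot_irr)
    then show "\<not> PP 1 C" unfolding PP_def DR_def by simp
  qed
  then show ?thesis unfolding fP_def sP_def by (intro fps_ext) simp
qed

lemma fG1: "fG 1 = 0"
proof -
  have "cnt 0 n (PG 1) = 0" for n
  proof (rule cnt_none)
    fix C assume "ok {0..<0+n} C"
    then have "hd C \<in> set C" by (rule ok_ne)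
    then have "hasdec (<) (cyc C) (set C) 1" by (rule hasdec_one) simp
    then show "\<not> PG 1 C" unfolding PG_def D0_def by simp
  qed
  then show ?thesis unfolding fG_def sG_def by (intro fps_ext) simp
qed

lemma fQ_small: "k < 3 \<Longrightarrow> fQ k = 0"
proof -
  assume k: "k < 3"
  have "cnt 0 n (PQ k) = 0" for n
    by (rule cnt_none) (use k in \<open>auto simp: PQ_def DRL_def\<close>)
  then show ?thesis unfolding fQ_def sQ_def by (intro fps_ext) simp
qed

lemma nth0: "fps_nth (fF k) 0 = 0" "fps_nth (fP k) 0 = 0" "fps_nth (fG k) 0 = 0" "fps_nth (fQ k) 0 = 0"
  unfolding fF_def fP_def fG_def fQ_def by simp_all

lemma uniq:
  fixes A A' B c :: "real fps"
  assumes "A = c + A * B" "A' = c + A' * B" "fps_nth B 0 = 0"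
  shows "A = A'"
proof -
  have "A - A' = (A - A') * B" using assms(1,2) by (metis add_diff_cancel_left left_diff_distrib)
  then have "(A - A') * (1 - B) = 0" by (simp add: algebra_simps)
  moreover have "1 - B \<noteq> 0"
  proof
    assume "1 - B = 0"
    then have "fps_nth (1 - B) 0 = 0" by simp
    then show False using assms(3) by simp
  qed
  ultimately have "A - A' = 0" by simp
  then show ?thesis by simp
qed

lemma G2: "fG 2 = fps_X"
  using G_eq[of 2] fF1 by (simp add: X3_def)

lemma F2: "fF 2 = fps_X"
  using F_eq[of 2] fP1 by simp

lemma P2: "fP 2 = fps_X + fP 2 * fps_X"
  using P_eq[of 2] G2 by simp

lemma Q3: "fQ 3 = fps_X"
  using Q_eq[of 3] fG1 by simp

lemma G3: "fG 3 = fP 2"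
proof (rule uniq[OF _ P2])
  show "fG 3 = fps_X + fG 3 * fps_X" using G_eq[of 3] Q3 by (simp add: X3_def mult.commute)
  show "fps_nth fps_X 0 = 0" by simp
qed

lemma GP: "3 \<le> m \<Longrightarrow> fG m = fP (m - 1)"
proof (induction m rule: dec_induct)
  case base then show ?case using G3 by simp
next
  case (step m)
  define p where "p = fP (m - 1)"
  have Pm: "fP m = fps_X + fP m * p" using P_eq[of m] step unfolding p_def by simp
  have Fm: "fF m = fps_X + fF m * p" using F_eq[of m] step unfolding p_def by (simp add: mult.commute)
  have FP: "fF m = fP m" using uniq[OF Fm Pm] unfolding p_def by (simp add: nth0)
  have Q: "fQ (Suc m) = fps_X + fQ (Suc m) * fG (m - 1)" using Q_eq[of "Suc m"] step by simp
  have P': "p = fps_X + p * fG (m - 1)" using P_eq[of "m - 1"] step unfolding p_def by simp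
  have QP: "fQ (Suc m) = p" using uniq[OF Q P'] by (simp add: nth0)
  have G: "fG (Suc m) = fps_X + X3 (Suc m) * fG (Suc m) + (fQ (Suc m) - X3 (Suc m)) * fF m"
    using G_eq[of "Suc m"] step by simp
  then have G': "fG (Suc m) = (fps_X + (p - fps_X) * fF m) + fG (Suc m) * fps_X"
    using step QP unfolding X3_def by (simp add: algebra_simps)
  have F': "fF m = (fps_X + (p - fps_X) * fF m) + fF m * fps_X"
    using Fm by (simp add: algebra_simps)
  have "fG (Suc m) = fF m" using uniq[OF G' F'] by simp
  then show ?case using FP by simp
qed

lemma PF_eq: "3 \<le> m \<Longrightarrow> fP m = fF m"
proof -
  assume m: "3 \<le> m"
  have "fP m = fps_X + fP m * fP (m - 1)" using P_eq[of m] GP[OF m] m by simp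
  moreover have "fF m = fps_X + fF m * fP (m - 1)" using F_eq[of m] m by (simp add: mult.commute)
  ultimately show ?thesis using uniq by (metis nth0(2))
qed

lemma main_rec: "4 \<le> k \<Longrightarrow> fF k * (1 - fF (k - 1)) = fps_X"
proof -
  assume k: "4 \<le> k"
  have "fF k = fps_X + fP (k - 1) * fF k" using F_eq[of k] k by simp
  moreover have "fP (k - 1) = fF (k - 1)" using PF_eq[of "k - 1"] k by simp
  ultimately have "fF k = fps_X + fF (k - 1) * fF k" by simp
  then show ?thesis by (simp add: algebra_simps)
qed

lemma main3: "fF 3 * (1 - 2 * fps_X) = fps_X * (1 - fps_X)"
proof -
  define F where "F = fF 3"
  define P where "P = fP 2"
  have e1: "F = fps_X + P * F" using F_eq[of 3] unfolding F_def P_def by simp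
  have e2: "P = fps_X + P * fps_X" using P2 unfolding P_def .
  have "F * (1 - 2 * fps_X) = F * (1 - fps_X) - F * fps_X" by (simp add: algebra_simps)
  also have "F * fps_X = F * (P - P * fps_X)" using e2 by (metis add_diff_cancel_right')
  also have "F * (1 - fps_X) - F * (P - P * fps_X) = (F - P * F) * (1 - fps_X)"
    by (simp add: algebra_simps)
  also have "F - P * F = fps_X" using e1 by (metis add_diff_cancel_right')
  finally show ?thesis unfolding F_def .
qed

lemma div_of_mult:
  fixes a b c :: "real fps"
  assumes "a * b = c" "fps_nth b 0 \<noteq> 0"
  shows "a = c / b"
proof -
  have "b \<noteq> 0" using assms(2) by auto
  then have "a * b / b = a" by simp
  then show ?thesis using assms(1) by simp
qed


section \<open>Connection to the definitions\<close>

lemma subseq_Cons_nth: "i < length xs \<Longrightarrow> subseq ys (drop (Suc i) xs) \<Longrightarrow> subseq (xs ! i # ys) xs"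
proof -
  assume i: "i < length xs" and s: "subseq ys (drop (Suc i) xs)"
  have e: "xs = take i xs @ xs ! i # drop (Suc i) xs" using i by (rule id_take_nth_drop)
  have "subseq (xs ! i # ys) (xs ! i # drop (Suc i) xs)" using s by simp
  then have "subseq (xs ! i # ys) (take i xs @ xs ! i # drop (Suc i) xs)" by (rule list_emb_append2)
  then show ?thesis using e by simp
qed

lemma subseq3_nth: "i < j \<Longrightarrow> j < l \<Longrightarrow> l < length xs \<Longrightarrow> subseq [xs ! i, xs ! j, xs ! l] xs"
proof -
  assume ij: "i < j" and jl: "j < l" and l: "l < length xs"
  have "xs ! l = drop (Suc j) xs ! (l - Suc j)" using jl l by simp
  moreover have "l - Suc j < length (drop (Suc j) xs)" using jl l by simp
  ultimately have "xs ! l \<in> set (drop (Suc j) xs)" by (metis nth_mem)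
  then have s1: "subseq [xs ! l] (drop (Suc j) xs)" by (simp add: subseq_singleton_left)
  define ys where "ys = drop (Suc i) xs"
  have y1: "ys ! (j - Suc i) = xs ! j" unfolding ys_def using ij jl l by simp
  have y2: "drop (Suc (j - Suc i)) ys = drop (Suc j) xs" unfolding ys_def using ij jl l by simp
  have y3: "j - Suc i < length ys" unfolding ys_def using ij jl l by simp
  have "subseq (ys ! (j - Suc i) # [xs ! l]) ys" by (rule subseq_Cons_nth[OF y3]) (simp add: y2 s1)
  then have s2: "subseq [xs ! j, xs ! l] (drop (Suc i) xs)" using y1 unfolding ys_def by simp
  show ?thesis by (rule subseq_Cons_nth) (use ij jl l s2 in auto)
qed

lemma subseq_Cons_conv: "subseq (x # ys) xs \<Longrightarrow> \<exists>i<length xs. xs ! i = x \<and> subseq ys (drop (Suc i) xs)"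
proof -
  assume "subseq (x # ys) xs"
  then obtain us v vs where h: "xs = us @ v # vs" "x = v" "subseq ys vs" by (auto dest: list_emb_ConsD)
  show ?thesis
    by (rule exI[of _ "length us"]) (use h in auto)
qed

lemma subseq3_conv: assumes "subseq [x, y, z] xs"
  shows "\<exists>i j l. i < j \<and> j < l \<and> l < length xs \<and> xs ! i = x \<and> xs ! j = y \<and> xs ! l = z"
proof -
  obtain i where i: "i < length xs" "xs ! i = x" "subseq [y, z] (drop (Suc i) xs)"
    using subseq_Cons_conv[OF assms] by blast
  obtain j' where j: "j' < length (drop (Suc i) xs)" "drop (Suc i) xs ! j' = y"
      "subseq [z] (drop (Suc j') (drop (Suc i) xs))"
    using subseq_Cons_conv[OF i(3)] by blast
  obtain l' where l: "l' < length (drop (Suc j') (drop (Suc i) xs))"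
      "drop (Suc j') (drop (Suc i) xs) ! l' = z"
    using subseq_Cons_conv[OF j(3)] by blast
  show ?thesis
    by (rule exI[of _ i], rule exI[of _ "Suc i + j'"], rule exI[of _ "Suc (Suc i + j') + l'"])
      (use i j l in \<open>auto simp: add.commute add.left_commute\<close>)
qed

lemma less3: "(a::nat) < 3 \<longleftrightarrow> a = 0 \<or> a = 1 \<or> a = 2" by auto

lemma len213: "length [2, 1, 3::nat] = 3" by simp

lemma contains_213: "contains_pattern xs [2, 1, 3] \<longleftrightarrow> \<not> av213 xs"
proof
  assume "contains_pattern xs [2, 1, 3]"
  then obtain idx where sm: "strict_mono_on {..<3} idx" and b: "\<forall>a<3. idx a < length xs"
    and c: "\<forall>a<3. \<forall>b<3. (xs ! idx a < xs ! idx b) \<longleftrightarrow> ([2, 1, 3::nat] ! a < [2, 1, 3] ! b)"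
    unfolding contains_pattern_def len213 by blast
  have o: "idx 0 < idx 1" "idx 1 < idx 2" using sm by (auto intro: strict_mono_onD)
  have "xs ! idx 1 < xs ! idx 0" using c[rule_format, of 1 0] by simp
  moreover have "xs ! idx 0 < xs ! idx 2" using c[rule_format, of 0 2] by simp
  moreover have "subseq [xs ! idx 0, xs ! idx 1, xs ! idx 2] xs" using o b by (intro subseq3_nth) auto
  ultimately show "\<not> av213 xs" unfolding av213_def by blast
next
  assume "\<not> av213 xs"
  then have "\<exists>x y z. subseq [x, y, z] xs \<and> y < x \<and> x < z" unfolding av213_def by (rule notnotD)
  then obtain x y z where s: "subseq [x, y, z] xs" "y < x" "x < z" by (elim exE conjE)
  obtain i j l where ijl: "i < j" "j < l" "l < length xs" "xs ! i = x" "xs ! j = y" "xs ! l = z"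
    using subseq3_conv[OF s(1)] by blast
  define idx where "idx a = (if a = 0 then i else if a = 1 then j else l)" for a :: nat
  have "strict_mono_on {..<3} idx"
    by (rule strict_mono_onI) (use ijl in \<open>auto simp: idx_def less3\<close>)
  moreover have "\<forall>a<3. idx a < length xs" using ijl by (auto simp: idx_def less3)
  moreover have "\<forall>a<3. \<forall>b<3. (xs ! idx a < xs ! idx b) \<longleftrightarrow> ([2, 1, 3::nat] ! a < [2, 1, 3] ! b)"
    using ijl s by (auto simp: idx_def less3)
  ultimately show "contains_pattern xs [2, 1, 3]" unfolding contains_pattern_def len213 by blast
qed

lemma delta_nth: "a < k \<Longrightarrow> delta k ! a = k - a"
proof -
  assume a: "a < k"
  have "rev [1..<k+1] ! a = [1..<k+1] ! (length [1..<k+1] - Suc a)"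
    using a by (intro rev_nth) simp
  also have "\<dots> = [1..<k+1] ! (k - Suc a)" by simp
  also have "\<dots> = 1 + (k - Suc a)" using a by (intro nth_upt) simp
  finally show ?thesis unfolding delta_def using a by simp
qed

lemma length_delta: "length (delta k) = k"
  unfolding delta_def by simp

lemma oneline_avoid: "avoids (map p [1..<n+1]) (delta k) \<longleftrightarrow> \<not> hasdec (<) p {1..n} k"
proof -
  note upt_Suc[simp del]
  let ?xs = "map p [1..<n+1]"
  have xs_nth: "\<And>i. i < n \<Longrightarrow> ?xs ! i = p (Suc i)" by (simp del: upt_Suc)
  have xs_len: "length ?xs = n" by (simp del: upt_Suc)
  have "contains_pattern ?xs (delta k) \<longleftrightarrow> hasdec (<) p {1..n} k"
  proof
    assume "contains_pattern ?xs (delta k)"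
    then obtain idx where sm: "strict_mono_on {..<k} idx" and b: "\<forall>a<k. idx a < n"
      and c: "\<forall>a<k. \<forall>b<k. (?xs ! idx a < ?xs ! idx b) \<longleftrightarrow> (delta k ! a < delta k ! b)"
      unfolding contains_pattern_def length_delta xs_len by blast
    define S where "S = (\<lambda>a. Suc (idx a)) ` {..<k}"
    have inj: "inj_on (\<lambda>a. Suc (idx a)) {..<k}"
      using strict_mono_on_imp_inj_on[OF sm] unfolding inj_on_def by auto
    have "S \<subseteq> {1..n}" unfolding S_def using b by auto
    moreover have "card S = k" unfolding S_def using card_image[OF inj] by simp
    moreover have "finite S" unfolding S_def by simp
    moreover have "decset (<) p S" unfolding decset_def
    proof (intro ballI impI)
      fix x y assume x: "x \<in> S" and y: "y \<in> S" and xy: "x < y"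
      obtain a where a: "a < k" "x = Suc (idx a)" using x unfolding S_def by auto
      obtain b' where b': "b' < k" "y = Suc (idx b')" using y unfolding S_def by auto
      have "idx a < idx b'" using xy a b' by simp
      then have ab: "a < b'"
        using sm a(1) b'(1) by (metis lessThan_iff linorder_neqE_nat order_less_asym strict_mono_onD)
      have "delta k ! b' < delta k ! a" using ab a(1) b'(1) by (simp add: delta_nth)
      then have "?xs ! idx b' < ?xs ! idx a" using c a(1) b'(1) by blast
      then show "p y < p x" using a b' b xs_nth by simp
    qed
    ultimately show "hasdec (<) p {1..n} k" unfolding hasdec_def by blast
  next
    assume "hasdec (<) p {1..n} k"
    then obtain S where S: "S \<subseteq> {1..n}" "finite S" "card S = k" "decset (<) p S"
      unfolding hasdec_def by blast
    define L where "L = sorted_list_of_set S"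
    have Ll: "length L = k" unfolding L_def using S by simp
    have Ls: "set L = S" unfolding L_def using S by simp
    have Lsort: "sorted_wrt (<) L" unfolding L_def by (rule strict_sorted_list_of_set)
    have Lmem: "\<And>a. a < k \<Longrightarrow> L ! a \<in> S" using Ll Ls nth_mem by blast
    have Llt: "\<And>a b. a < b \<Longrightarrow> b < k \<Longrightarrow> L ! a < L ! b" using Lsort Ll sorted_wrt_nth_less by blast
    define idx where "idx a = L ! a - 1" for a
    have Lge: "\<And>a. a < k \<Longrightarrow> 1 \<le> L ! a \<and> L ! a \<le> n"
    proof -
      fix a assume "a < k"
      then have "L ! a \<in> {1..n}" using Lmem S(1) by blast
      then show "1 \<le> L ! a \<and> L ! a \<le> n" by simp
    qed
    have sm: "strict_mono_on {..<k} idx"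
    proof (rule strict_mono_onI)
      fix r s assume "r \<in> {..<k}" "s \<in> {..<k}" "r < s"
      then show "idx r < idx s" using Llt[of r s] Lge[of r] Lge[of s] unfolding idx_def by auto
    qed
    have b: "\<forall>a<k. idx a < n"
      using Lge unfolding idx_def by fastforce
    have xi: "\<And>a. a < k \<Longrightarrow> ?xs ! idx a = p (L ! a)"
      using Lge xs_nth unfolding idx_def by (metis Suc_diff_1 Suc_le_lessD diff_less less_le_trans zero_less_one)
    have c: "\<forall>a<k. \<forall>b<k. (?xs ! idx a < ?xs ! idx b) \<longleftrightarrow> (delta k ! a < delta k ! b)"
    proof (intro allI impI)
      fix a b assume a': "a < k" and b': "b < k"
      show "(?xs ! idx a < ?xs ! idx b) \<longleftrightarrow> (delta k ! a < delta k ! b)"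
      proof (cases a b rule: linorder_cases)
        case less
        then have "p (L ! b) < p (L ! a)" using S(4) Lmem[OF a'] Lmem[OF b'] Llt[OF less b'] unfolding decset_def by blast
        then show ?thesis using xi a' b' less by (simp add: delta_nth)
      next
        case equal then show ?thesis by simp
      next
        case greater
        then have "p (L ! a) < p (L ! b)" using S(4) Lmem[OF a'] Lmem[OF b'] Llt[OF greater a'] unfolding decset_def by blast
        then show ?thesis using xi a' b' greater by (simp add: delta_nth)
      qed
    qed
    show "contains_pattern ?xs (delta k)" unfolding contains_pattern_def length_delta xs_len
      using sm b c by blast
  qed
  then show ?thesis unfolding avoids_def by simp
qed


section \<open>Cyclic permutations and lists\<close>

lemma funpow_in: "p permutes {1..n} \<Longrightarrow> x \<in> {1..n} \<Longrightarrow> (p ^^ m) x \<in> {1..n}"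
proof (induction m)
  case 0 then show ?case by simp
next
  case (Suc m)
  then have "(p ^^ m) x \<in> {1..n}" by blast
  then have "p ((p ^^ m) x) \<in> {1..n}" using permutes_in_image[OF Suc.prems(1)] by blast
  then show ?case by simp
qed

lemma funpow_back:
  assumes "inj p" "(p ^^ i) x = (p ^^ j) x" "i \<le> j"
  shows "(p ^^ (j - i)) x = x"
proof -
  have "(p ^^ j) x = (p ^^ i) ((p ^^ (j - i)) x)"
    using assms(3) by (metis funpow_add le_add_diff_inverse comp_apply)
  then have "(p ^^ i) ((p ^^ (j - i)) x) = (p ^^ i) x" using assms(2) by simp
  moreover have "inj (p ^^ i)" using assms(1) by simp
  ultimately show ?thesis by (meson injD)
qed

lemma no_short_period:
  assumes cp: "cyclic_perm n p" and d: "0 < d" "d < n" and per: "(p ^^ d) 1 = 1"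
  shows False
proof -
  have orb: "{(p ^^ m) 1 | m. True} = {1..n}" using cp unfolding cyclic_perm_def by blast
  have "{(p ^^ m) 1 | m. True} \<subseteq> (\<lambda>m. (p ^^ m) 1) ` {..<d}"
  proof
    fix x assume "x \<in> {(p ^^ m) 1 | m. True}"
    then obtain m where "x = (p ^^ m) 1" by blast
    then have "x = (p ^^ (m mod d)) 1" using funpow_mod_eq[of d p 1 m] per by simp
    moreover have "m mod d < d" using d by simp
    ultimately show "x \<in> (\<lambda>m. (p ^^ m) 1) ` {..<d}" by blast
  qed
  then have "card {1..n} \<le> card ((\<lambda>m. (p ^^ m) 1) ` {..<d})" using orb by (metis card_mono finite_imageI finite_lessThan)
  also have "\<dots> \<le> d" using card_image_le[of "{..<d}" "\<lambda>m. (p ^^ m) 1"] by simp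
  finally show False using d by simp
qed

lemma cf_nth: "i < n \<Longrightarrow> cycle_form n p ! i = (p ^^ i) 1"
  unfolding cycle_form_def by simp

lemma cf_len: "length (cycle_form n p) = n"
  unfolding cycle_form_def by simp

lemma cyc_perm_props:
  assumes cp: "cyclic_perm n p"
  shows "distinct (cycle_form n p)" "set (cycle_form n p) = {1..n}" "hd (cycle_form n p) = 1"
    "\<And>x. x \<in> {1..n} \<Longrightarrow> p x = cyc (cycle_form n p) x"
proof -
  have perm: "p permutes {1..n}" and n: "1 \<le> n" using cp unfolding cyclic_perm_def by auto
  have injp: "inj p" using permutes_inj[OF perm] .
  define C where "C = cycle_form n p"
  have Cn: "\<And>i. i < n \<Longrightarrow> C ! i = (p ^^ i) 1" unfolding C_def by (rule cf_nth)
  have Cl: "length C = n" unfolding C_def by (rule cf_len)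
  have dist: "distinct C"
    unfolding distinct_conv_nth
  proof (intro allI impI)
    fix i j assume i: "i < length C" and j: "j < length C" and ij: "i \<noteq> j"
    show "C ! i \<noteq> C ! j"
    proof
      assume e: "C ! i = C ! j"
      show False
      proof (cases "i < j")
        case True
        have "(p ^^ (j - i)) 1 = 1" using funpow_back[OF injp, of i 1 j] e Cn i j Cl True by simp
        moreover have "0 < j - i" "j - i < n" using True j Cl by auto
        ultimately show False using no_short_period[OF cp, of "j - i"] by blast
      next
        case False
        then have "j < i" using ij by simp
        have "(p ^^ (i - j)) 1 = 1" using funpow_back[OF injp, of j 1 i] e Cn i j Cl \<open>j < i\<close> by simp
        moreover have "0 < i - j" "i - j < n" using \<open>j < i\<close> i Cl by auto
        ultimately show False using no_short_period[OF cp, of "i - j"] by blast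
      qed
    qed
  qed
  have sub: "set C \<subseteq> {1..n}"
  proof
    fix x assume "x \<in> set C"
    then obtain i where "i < n" "x = C ! i" using Cl by (auto simp: in_set_conv_nth)
    then show "x \<in> {1..n}" using Cn funpow_in[OF perm, of 1] n by simp
  qed
  have setC: "set C = {1..n}"
  proof (rule card_subset_eq)
    show "finite {1..n}" by simp
    show "set C \<subseteq> {1..n}" by (rule sub)
    show "card (set C) = card {1..n}" using distinct_card[OF dist] Cl by simp
  qed
  have hdC: "hd C = 1" using Cn[of 0] n Cl by (cases C) auto
  have pc: "p x = cyc C x" if x: "x \<in> {1..n}" for x
  proof -
    obtain i where i: "i < n" "x = C ! i" using x setC Cl by (metis in_set_conv_nth)
    have cy: "cyc C x = C ! (Suc i mod n)" using cyc_nth[OF dist, of i] i Cl by simp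
    show ?thesis
    proof (cases "Suc i < n")
      case True
      then show ?thesis using cy i Cn[of i] Cn[of "Suc i"] by simp
    next
      case False
      then have si: "Suc i = n" using i by simp
      have "(p ^^ n) 1 \<in> set C" using funpow_in[OF perm, of 1 n] n setC by simp
      then obtain m where m: "m < n" "(p ^^ n) 1 = C ! m" using Cl by (metis in_set_conv_nth)
      have m0: "m = 0"
      proof (rule ccontr)
        assume "m \<noteq> 0"
        have "(p ^^ m) 1 = (p ^^ n) 1" using m Cn by simp
        then have "(p ^^ (n - m)) 1 = 1" using funpow_back[OF injp, of m 1 n] m by simp
        moreover have "0 < n - m" "n - m < n" using m \<open>m \<noteq> 0\<close> by auto
        ultimately show False using no_short_period[OF cp, of "n - m"] by blast
      qed
      have "p x = (p ^^ n) 1" using i si Cn[of i] by (metis funpow.simps(2) comp_apply)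
      also have "\<dots> = C ! 0" using m m0 by simp
      also have "\<dots> = cyc C x" using cy si by simp
      finally show ?thesis .
    qed
  qed
  show "distinct (cycle_form n p)" using dist unfolding C_def .
  show "set (cycle_form n p) = {1..n}" using setC unfolding C_def .
  show "hd (cycle_form n p) = 1" using hdC unfolding C_def .
  show "\<And>x. x \<in> {1..n} \<Longrightarrow> p x = cyc (cycle_form n p) x" using pc unfolding C_def by blast
qed

lemma perm_of_list:
  assumes dist: "distinct C" and setC: "set C = {1..n}" and hdC: "hd C = 1" and n: "1 \<le> n"
  defines "p \<equiv> \<lambda>x. if x \<in> set C then cyc C x else x"
  shows "cyclic_perm n p" "cycle_form n p = C"
proof -
  have Cl: "length C = n" using distinct_card[OF dist] setC by simp
  have inj: "inj_on p (set C)"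
    using cyc_inj[OF dist] unfolding p_def inj_on_def by auto
  have img: "p ` set C \<subseteq> set C" using cyc_in[OF dist] unfolding p_def by auto
  have "p ` set C = set C" using endo_inj_surj[OF _ img inj] by simp
  then have "bij_betw p (set C) (set C)" using inj unfolding bij_betw_def by simp
  then have perm: "p permutes {1..n}" using setC by (intro bij_imp_permutes) (auto simp: p_def)
  have pw: "(p ^^ i) 1 = C ! i" if "i < n" for i
    using that
  proof (induction i)
    case 0 then show ?case using hdC Cl by (cases C) auto
  next
    case (Suc i)
    then have "(p ^^ Suc i) 1 = p (C ! i)" by simp
    also have "\<dots> = cyc C (C ! i)" unfolding p_def using Suc Cl by auto
    also have "\<dots> = C ! (Suc i mod length C)" using cyc_nth[OF dist] Suc Cl by simp
    also have "\<dots> = C ! Suc i" using Suc Cl by simp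
    finally show ?case .
  qed
  show cf: "cycle_form n p = C"
    unfolding cycle_form_def
  proof (rule nth_equalityI)
    show "length (map (\<lambda>i. (p ^^ i) 1) [0..<n]) = length C" using Cl by simp
    fix i assume "i < length (map (\<lambda>i. (p ^^ i) 1) [0..<n])"
    then show "map (\<lambda>i. (p ^^ i) 1) [0..<n] ! i = C ! i" using pw by simp
  qed
  have orb: "{(p ^^ m) 1 | m. True} = {1..n}"
  proof
    show "{(p ^^ m) 1 | m. True} \<subseteq> {1..n}" using funpow_in[OF perm, of 1] n by auto
    show "{1..n} \<subseteq> {(p ^^ m) 1 | m. True}"
    proof
      fix x assume "x \<in> {1..n}"
      then obtain i where i: "i < n" "x = C ! i" using setC Cl by (metis in_set_conv_nth)
      then have "x = (p ^^ i) 1" using pw[OF i(1)] by simp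
      then show "x \<in> {(p ^^ m) 1 | m. True}" by blast
    qed
  qed
  show "cyclic_perm n p" unfolding cyclic_perm_def using perm n orb by simp
qed

lemma one_line_eq: "one_line n p = map p [1..<n+1]"
  unfolding one_line_def ..

lemma a_eq: assumes n: "1 \<le> n" shows "a_213 n k = cnt 1 n (PF k)"
proof -
  define PS where "PS = {p. cyclic_perm n p \<and> avoids (one_line n p) (delta k) \<and> avoids (cycle_form n p) [2,1,3]}"
  define CS where "CS = {C. ok {1..<1+n} C \<and> PF k C}"
  have V: "{1..<1+n} = {1..n}" by auto
  have D0eq: "D0 C k \<longleftrightarrow> hasdec (<) p {1..n} k"
    if "set C = {1..n}" "\<And>x. x \<in> {1..n} \<Longrightarrow> p x = cyc C x" for C p
  proof -
    have "hasdec (<) (cyc C) {1..n} k \<longleftrightarrow> hasdec (<) p {1..n} k"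
      by (rule hasdec_cong) (use that(2) in auto)
    then show ?thesis unfolding D0_def that(1) .
  qed
  have "bij_betw (cycle_form n) PS CS"
  proof (rule bij_betw_imageI)
    show "inj_on (cycle_form n) PS"
    proof
      fix p q assume p: "p \<in> PS" and q: "q \<in> PS" and e: "cycle_form n p = cycle_form n q"
      have cp: "cyclic_perm n p" "cyclic_perm n q" using p q unfolding PS_def by auto
      show "p = q"
      proof
        fix x
        show "p x = q x"
        proof (cases "x \<in> {1..n}")
          case True
          then show ?thesis using cyc_perm_props(4)[OF cp(1) True] cyc_perm_props(4)[OF cp(2) True] e by simp
        next
          case False
          have "p permutes {1..n}" "q permutes {1..n}" using cp unfolding cyclic_perm_def by auto
          then show ?thesis using False by (simp add: permutes_not_in)
        qed
      qed
    qed
    show "cycle_form n ` PS = CS"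
    proof
      show "cycle_form n ` PS \<subseteq> CS"
      proof
        fix C assume "C \<in> cycle_form n ` PS"
        then obtain p where p: "p \<in> PS" "C = cycle_form n p" by blast
        have cp: "cyclic_perm n p" and av1: "avoids (one_line n p) (delta k)"
          and av2: "avoids (cycle_form n p) [2,1,3]" using p unfolding PS_def by auto
        note props = cyc_perm_props[OF cp]
        have "C \<noteq> []" using p(2) cf_len[of n p] n by auto
        moreover have "\<forall>x\<in>{1..<1+n}. hd C \<le> x" using props(3) p(2) by auto
        moreover have "av213 C" using av2 p(2) contains_213 unfolding avoids_def by blast
        ultimately have "ok {1..<1+n} C" unfolding ok_def V using props p(2) by simp
        moreover have "PF k C"
          using av1 oneline_avoid[of p n k] D0eq[of C p] props p(2) unfolding PF_def one_line_eq by auto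
        ultimately show "C \<in> CS" unfolding CS_def by simp
      qed
      show "CS \<subseteq> cycle_form n ` PS"
      proof
        fix C assume "C \<in> CS"
        then have ok: "ok {1..<1+n} C" and pf: "PF k C" unfolding CS_def by auto
        have dist: "distinct C" and setC: "set C = {1..n}" and av: "av213 C"
          using ok unfolding ok_def V by auto
        have hdC: "hd C = 1" using ok_hd(1)[OF ok] .
        define p where "p = (\<lambda>x. if x \<in> set C then cyc C x else x)"
        have cp: "cyclic_perm n p" and cf: "cycle_form n p = C"
          using perm_of_list[OF dist setC hdC n] unfolding p_def by auto
        have "avoids (one_line n p) (delta k)"
          using pf oneline_avoid[of p n k] D0eq[of C p] setC unfolding PF_def one_line_eq p_def by auto
        moreover have "avoids (cycle_form n p) [2,1,3]" using cf av contains_213 unfolding avoids_def by blast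
        ultimately have "p \<in> PS" unfolding PS_def using cp by simp
        then show "C \<in> cycle_form n ` PS" using cf by force
      qed
    qed
  qed
  then have "card PS = card CS" by (rule bij_betw_same_card)
  then show ?thesis unfolding a_213_def cnt_def PS_def CS_def by simp
qed

lemma f_eq: "f_213 k = fF k"
proof (rule fps_ext)
  fix n :: nat
  show "fps_nth (f_213 k) n = fps_nth (fF k) n"
  proof (cases "n = 0")
    case True then show ?thesis unfolding f_213_def fF_def by simp
  next
    case False
    then have "a_213 n k = cnt 0 n (PF k)" using a_eq[of n k] cnt_shift(1)[of 1 n k] by simp
    then show ?thesis unfolding f_213_def fF_def sF_def using False by simp
  qed
qed

theorem corollary2p8:
  shows "(\<forall>k\<ge>4. f_213 k = fps_X / (1 - f_213 (k - 1)))
         \<and> f_213 1 = 0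
         \<and> f_213 2 = fps_X
         \<and> f_213 3 = fps_X * (1 - fps_X) / (1 - 2 * fps_X)"
proof (intro conjI allI impI)
  fix k :: nat assume k: "4 \<le> k"
  show "f_213 k = fps_X / (1 - f_213 (k - 1))"
    unfolding f_eq using main_rec[OF k] by (rule div_of_mult) (simp add: nth0)
next
  show "f_213 1 = 0" unfolding f_eq by (rule fF1)
next
  show "f_213 2 = fps_X" unfolding f_eq by (rule F2)
next
  show "f_213 3 = fps_X * (1 - fps_X) / (1 - 2 * fps_X)"
    unfolding f_eq using main3 by (rule div_of_mult) simp
qed

end
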